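(* Let $\mathcal{I} \in \mathrm{Ins}(\Omega,\mathcal{H},\mathcal{K})$ and $\mathcal{J} \in \mathrm{Ins}(\Lambda,\mathcal{H},\mathcal{V})$ be instruments such that the Lüders instruments $\mathcal{I}^{\mathsf{A}^{\mathcal{I}}}$ and $\mathcal{I}^{\mathsf{A}^{\mathcal{J}}}$ of their induced POVMs are compatible. Then $\mathcal{I}$ and $\mathcal{J}$ are compatible.
   Context: All Hilbert spaces are finite-dimensional and complex, and all outcome sets are finite. A POVM $\mathsf{A}\in\mathcal{O}(\Omega,\mathcal{H})$ is a map $x\mapsto \mathsf{A}(x)$ from $\Omega$ to positive operators on $\mathcal{H}$ with $\sum_x \mathsf{A}(x)=I$. An instrument $\mathcal{I}\in\mathrm{Ins}(\Omega,\mathcal{H},\mathcal{K})$ is a family $(\mathcal{I}_x)_{x\in\Omega}$ of completely positive trace-nonincreasing linear maps $\mathcal{L}(\mathcal{H})\to\mathcal{L}(\mathcal{K})$ whose sum is trace preserving; its induced POVM $\mathsf{A}^{\mathcal{I}}$ is defined by $\mathrm{tr}[\mathsf{A}^{\mathcal{I}}(x)\varrho]=\mathrm{tr}[\mathcal{I}_x(\varrho)]$. The Lüders instrument of a POVM $\mathsf{A}\in\mathcal{O}(\Omega,\mathcal{H})$ is $\mathcal{I}^{\mathsf{A}}\in\mathrm{Ins}(\Omega,\mathcal{H},\mathcal{H})$, $\mathcal{I}^{\mathsf{A}}_x(\varrho)=\sqrt{\mathsf{A}(x)}\varrho\sqrt{\mathsf{A}(x)}$. Two instruments $\mathcal{I}\in\mathrm{Ins}(\Omega,\mathcal{H},\mathcal{K})$,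 $\mathcal{J}\in\mathrm{Ins}(\Lambda,\mathcal{H},\mathcal{V})$ are compatible if there is $\mathcal{G}\in\mathrm{Ins}(\Omega\times\Lambda,\mathcal{H},\mathcal{K}\otimes\mathcal{V})$ with $\sum_{x}\mathrm{tr}_{\mathcal{K}}[\mathcal{G}_{(x,y)}(\varrho)]=\mathcal{J}_y(\varrho)$ for all $y$ and $\sum_y\mathrm{tr}_{\mathcal{V}}[\mathcal{G}_{(x,y)}(\varrho)]=\mathcal{I}_x(\varrho)$ for all $x$, for all states $\varrho$. *)

theory Defs
  imports Complex_Main
begin

text \<open>Finite-dimensional Hilbert space C^'a, with 'a a finite (nonempty) index type.
  Operators in L(C^'a) are represented by their matrices 'a \<Rightarrow> 'a \<Rightarrow> complex.
  Outcome sets are finite types; the tensor product C^'k (x) C^'v is C^('k \<times> 'v).\<close>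

type_synonym 'a op = "'a \<Rightarrow> 'a \<Rightarrow> complex"

definition mmult :: "('a::finite) op \<Rightarrow> 'a op \<Rightarrow> 'a op" where
  "mmult A B = (\<lambda>i j. \<Sum>k\<in>UNIV. A i k * B k j)"

definition mtrace :: "('a::finite) op \<Rightarrow> complex" where
  "mtrace A = (\<Sum>i\<in>UNIV. A i i)"

definition idop :: "'a op" where
  "idop = (\<lambda>i j. if i = j then 1 else 0)"

text \<open>Positivity of the restriction of an operator to the coordinate subspace spanned by S:
  the quadratic form is real and nonnegative.\<close>
definition psd_on :: "'a set \<Rightarrow> 'a op \<Rightarrow> bool" where
  "psd_on S A \<longleftrightarrow> (\<forall>v :: 'a \<Rightarrow> complex.
      Im (\<Sum>i\<in>S. \<Sum>j\<in>S. cnj (v i) * A i j * v j) = 0 \<and>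
      Re (\<Sum>i\<in>S. \<Sum>j\<in>S. cnj (v i) * A i j * v j) \<ge> 0)"

definition psd :: "('a::finite) op \<Rightarrow> bool" where
  "psd A \<longleftrightarrow> psd_on UNIV A"

definition is_state :: "('a::finite) op \<Rightarrow> bool" where
  "is_state \<rho> \<longleftrightarrow> psd \<rho> \<and> mtrace \<rho> = 1"

definition is_linear_map :: "('a op \<Rightarrow> 'b op) \<Rightarrow> bool" where
  "is_linear_map \<Phi> \<longleftrightarrow>
     (\<forall>A B. \<Phi> (\<lambda>i j. A i j + B i j) = (\<lambda>i j. \<Phi> A i j + \<Phi> B i j)) \<and>
     (\<forall>c A. \<Phi> (\<lambda>i j. c * A i j) = (\<lambda>i j. c * \<Phi> A i j))"

text \<open>(id_n \<otimes> \<Phi>) acting on L(C^n \<otimes> C^'a); the ancilla C^n has basis indices {..<n}.\<close>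
definition ampl :: "('a op \<Rightarrow> 'b op) \<Rightarrow> (nat \<times> 'a) op \<Rightarrow> (nat \<times> 'b) op" where
  "ampl \<Phi> X = (\<lambda>(i, b) (j, b'). \<Phi> (\<lambda>a a'. X (i, a) (j, a')) b b')"

definition completely_positive :: "(('a::finite) op \<Rightarrow> ('b::finite) op) \<Rightarrow> bool" where
  "completely_positive \<Phi> \<longleftrightarrow>
     (\<forall>n::nat. \<forall>X. psd_on ({..<n} \<times> UNIV) X \<longrightarrow> psd_on ({..<n} \<times> UNIV) (ampl \<Phi> X))"

definition trace_nonincreasing :: "(('a::finite) op \<Rightarrow> ('b::finite) op) \<Rightarrow> bool" where
  "trace_nonincreasing \<Phi> \<longleftrightarrow> (\<forall>\<rho>. psd \<rho> \<longrightarrow> Re (mtrace (\<Phi> \<rho>)) \<le> Re (mtrace \<rho>))"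

text \<open>Instruments Ins(\<Omega>, C^'a, C^'b) with \<Omega> = UNIV :: 'x set.\<close>
definition instrument :: "(('x::finite) \<Rightarrow> ('a::finite) op \<Rightarrow> ('b::finite) op) \<Rightarrow> bool" where
  "instrument I \<longleftrightarrow>
     (\<forall>x. is_linear_map (I x) \<and> completely_positive (I x) \<and> trace_nonincreasing (I x)) \<and>
     (\<forall>\<rho>. mtrace (\<lambda>i j. \<Sum>x\<in>UNIV. I x \<rho> i j) = mtrace \<rho>)"

definition induced_povm :: "(('x::finite) \<Rightarrow> ('a::finite) op \<Rightarrow> ('b::finite) op) \<Rightarrow> 'x \<Rightarrow> 'a op" where
  "induced_povm I x = (THE A. \<forall>\<rho>. mtrace (mmult A \<rho>) = mtrace (I x \<rho>))"

definition msqrt :: "('a::finite) op \<Rightarrow> 'a op" where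
  "msqrt A = (THE S. psd S \<and> mmult S S = A)"

definition lueders :: "(('x::finite) \<Rightarrow> ('a::finite) op) \<Rightarrow> 'x \<Rightarrow> 'a op \<Rightarrow> 'a op" where
  "lueders A x \<rho> = mmult (mmult (msqrt (A x)) \<rho>) (msqrt (A x))"

definition ptrace1 :: "(('k::finite) \<times> 'v) op \<Rightarrow> 'v op" where
  "ptrace1 M = (\<lambda>v v'. \<Sum>k\<in>UNIV. M (k, v) (k, v'))"

definition ptrace2 :: "('k \<times> ('v::finite)) op \<Rightarrow> 'k op" where
  "ptrace2 M = (\<lambda>k k'. \<Sum>v\<in>UNIV. M (k, v) (k', v))"

definition compatible ::
  "(('x::finite) \<Rightarrow> ('a::finite) op \<Rightarrow> ('k::finite) op) \<Rightarrow>
   (('y::finite) \<Rightarrow> 'a op \<Rightarrow> ('v::finite) op) \<Rightarrow> bool" where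
  "compatible I J \<longleftrightarrow>
     (\<exists>G :: 'x \<times> 'y \<Rightarrow> 'a op \<Rightarrow> ('k \<times> 'v) op.
        instrument G \<and>
        (\<forall>\<rho>. is_state \<rho> \<longrightarrow>
           (\<forall>y. (\<lambda>i j. \<Sum>x\<in>UNIV. ptrace1 (G (x, y) \<rho>) i j) = J y \<rho>) \<and>
           (\<forall>x. (\<lambda>i j. \<Sum>y\<in>UNIV. ptrace2 (G (x, y) \<rho>) i j) = I x \<rho>)))"

end

theory Submission
  imports Defs "HOL-Analysis.Analysis"
begin

definition ip :: "('a::finite \<Rightarrow> complex) \<Rightarrow> ('a \<Rightarrow> complex) \<Rightarrow> complex" where
  "ip u v = (\<Sum>i\<in>UNIV. cnj (u i) * v i)"
definition mv :: "('a::finite) op \<Rightarrow> ('a \<Rightarrow> complex) \<Rightarrow> ('a \<Rightarrow> complex)" where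
  "mv A v = (\<lambda>i. \<Sum>j\<in>UNIV. A i j * v j)"
definition qf :: "('a::finite) op \<Rightarrow> ('a \<Rightarrow> complex) \<Rightarrow> complex" where
  "qf A v = (\<Sum>i\<in>UNIV. \<Sum>j\<in>UNIV. cnj (v i) * A i j * v j)"
definition outer :: "('a \<Rightarrow> complex) \<Rightarrow> ('a \<Rightarrow> complex) \<Rightarrow> 'a op" where
  "outer u w = (\<lambda>i j. u i * cnj (w j))"
definition herm :: "'a op \<Rightarrow> bool" where
  "herm A \<longleftrightarrow> (\<forall>i j. A j i = cnj (A i j))"
definition ee :: "'a \<Rightarrow> 'a \<Rightarrow> complex" where
  "ee i = (\<lambda>j. if j = i then 1 else 0)"

lemma cnj_ee[simp]: "cnj (ee i j) = ee i j" by (simp add: ee_def)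
lemma sum_ee_r[simp]: "(\<Sum>j\<in>UNIV. f j * ee (i::'a::finite) j) = (f i :: complex)"
  by (simp add: ee_def if_distrib[of "\<lambda>x. _ * x"] sum.delta cong: if_cong)
lemma sum_ee_l[simp]: "(\<Sum>j\<in>UNIV. ee (i::'a::finite) j * f j) = (f i :: complex)"
  by (simp add: ee_def if_distrib[of "\<lambda>x. x * _"] sum.delta cong: if_cong)

lemma psd_qf: "psd A \<longleftrightarrow> (\<forall>v. Im (qf A v) = 0 \<and> Re (qf A v) \<ge> 0)"
  by (simp add: psd_def psd_on_def qf_def)

lemma qf_ip: "qf A v = ip v (mv A v)"
  by (simp add: qf_def ip_def mv_def sum_distrib_left mult.assoc)

lemma qf_expand:
  fixes A :: "('a::finite) op"
  shows "qf A (\<lambda>i. x i + c * y i) = qf A x + cnj c * ip y (mv A x) + c * ip x (mv A y) + cnj c * c * qf A y"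
  by (simp add: qf_def ip_def mv_def algebra_simps sum.distrib sum_distrib_left)

lemma psd_herm:
  fixes A :: "('a::finite) op"
  assumes "psd A" shows "herm A"
  unfolding herm_def
proof (intro allI)
  fix i j
  have q: "\<And>v. Im (qf A v) = 0" using assms by (simp add: psd_qf)
  have e: "\<And>c. qf A (\<lambda>k. ee i k + c * ee j k) = A i i + cnj c * A j i + c * A i j + cnj c * c * A j j"
    by (subst qf_expand) (simp add: qf_def ip_def mv_def)
  show "A j i = cnj (A i j)"
  proof (cases "i = j")
    case True
    have "Im (A i i) = 0" using q[of "ee i"] by (simp add: qf_def)
    then show ?thesis using True by (simp add: complex_eq_iff)
  next
    case False
    have "Im (qf A (ee i)) = 0" "Im (qf A (ee j)) = 0" using q by auto
    hence d: "Im (A i i) = 0" "Im (A j j) = 0" by (simp_all add: qf_def)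
    have 1: "Im (A j i + A i j) = 0" using q[of "\<lambda>k. ee i k + 1 * ee j k"] d unfolding e by simp
    have 2: "Re (A i j - A j i) = 0" using q[of "\<lambda>k. ee i k + \<i> * ee j k"] d unfolding e by simp
    show ?thesis using 1 2 by (simp add: complex_eq_iff)
  qed
qed

lemma ip_self: "ip v v = (\<Sum>i\<in>UNIV. complex_of_real ((cmod (v i))\<^sup>2))"
  unfolding ip_def by (rule sum.cong) (simp_all only: complex_norm_square mult.commute)

lemma ip_self_Re: "Re (ip v v) = (\<Sum>i\<in>UNIV. (cmod (v i))\<^sup>2)" "Im (ip v v) = 0"
  by (simp_all add: ip_self Re_sum Im_sum del: of_real_power)

lemma ip_self_eq0: "ip (v::'a::finite \<Rightarrow> complex) v = 0 \<longleftrightarrow> v = (\<lambda>i. 0)"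
proof
  assume "ip v v = 0"
  hence "(\<Sum>i\<in>UNIV. (cmod (v i))\<^sup>2) = 0" using ip_self_Re(1)[of v] by simp
  hence "\<forall>i\<in>UNIV. (cmod (v i))\<^sup>2 = 0" by (subst (asm) sum_nonneg_eq_0_iff) auto
  thus "v = (\<lambda>i. 0)" by auto
qed (simp add: ip_def)

lemma ip_self_ge0: "Re (ip v v) \<ge> 0"
  by (simp add: ip_self_Re sum_nonneg)

lemma herm_cnj: "herm A \<Longrightarrow> cnj (A i j) = A j i"
  unfolding herm_def by (metis complex_cnj_cnj)

lemma herm_ip:
  assumes "herm A" shows "ip x (mv A y) = cnj (ip y (mv A x))"
proof -
  have 1: "ip x (mv A y) = (\<Sum>i\<in>UNIV. \<Sum>j\<in>UNIV. cnj (x i) * A i j * y j)"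
    by (simp add: ip_def mv_def sum_distrib_left mult.assoc)
  have 2: "cnj (ip y (mv A x)) = (\<Sum>j\<in>UNIV. \<Sum>i\<in>UNIV. y j * cnj (A j i) * cnj (x i))"
    by (simp add: ip_def mv_def sum_distrib_left mult.assoc)
  show ?thesis unfolding 1 2 using assms
    by (subst sum.swap) (simp add: mult_ac herm_cnj)
qed

lemma psd_qf_zero:
  fixes Z :: "('a::finite) op"
  assumes "psd Z" "qf Z x = 0" shows "mv Z x = (\<lambda>i. 0)"
proof -
  define y where "y = mv Z x"
  have h: "herm Z" using assms psd_herm by auto
  define N where "N = Re (ip y y)"
  define q where "q = Re (qf Z y)"
  have q0: "q \<ge> 0" using assms(1) by (simp add: psd_qf q_def)
  have N0: "N \<ge> 0" by (simp add: N_def ip_self_ge0)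
  have "\<And>t::real. Re (qf Z (\<lambda>i. x i + of_real t * y i)) = 2 * t * N + t^2 * q"
  proof -
    fix t :: real
    have "ip x (mv Z y) = cnj (ip y y)" using herm_ip[OF h, of x y] by (simp add: y_def)
    also have "... = ip y y" using ip_self_Re(2)[of y] by (simp add: complex_eq_iff)
    finally have 1: "ip x (mv Z y) = ip y y" .
    show "Re (qf Z (\<lambda>i. x i + of_real t * y i)) = 2 * t * N + t^2 * q"
      unfolding qf_expand using assms(2) 1 ip_self_Re(2)[of y]
      by (simp add: y_def[symmetric] N_def q_def power2_eq_square)
  qed
  moreover have "\<And>t. Re (qf Z (\<lambda>i. x i + of_real t * y i)) \<ge> 0" using assms(1) by (simp add: psd_qf)
  ultimately have ge: "\<And>t::real. 2 * t * N + t^2 * q \<ge> 0" by metis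
  have "N = 0"
  proof (rule ccontr)
    assume "N \<noteq> 0" hence Np: "N > 0" using N0 by auto
    define t where "t = - N / (q + 1)"
    have tn: "t < 0" using Np q0 by (simp add: t_def)
    have "t * q + 2 * N = N * (q + 2) / (q + 1)" using q0 by (simp add: t_def field_simps)
    also have "... > 0" using Np q0 by simp
    finally have "t * (t * q + 2 * N) < 0" using tn by (simp add: mult_neg_pos)
    hence "2 * t * N + t^2 * q < 0" by (simp add: algebra_simps power2_eq_square)
    thus False using ge[of t] by simp
  qed
  hence "ip y y = 0" using ip_self_Re[of y] by (simp add: N_def complex_eq_iff)
  thus ?thesis using ip_self_eq0 y_def by auto
qed

lemma ip_lin_r: "ip u (\<lambda>i. a i + c * b i) = ip u a + c * ip u b"
  by (simp add: ip_def algebra_simps sum.distrib sum_distrib_left)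
lemma ip_lin_l: "ip (\<lambda>i. a i + c * b i) u = ip a u + cnj c * ip b u"
  by (simp add: ip_def algebra_simps sum.distrib sum_distrib_left)
lemma ip_diff_r: "ip u (\<lambda>i. a i - b i) = ip u a - ip u b"
  by (simp add: ip_def algebra_simps sum_subtractf)
lemma ip_diff_l: "ip (\<lambda>i. a i - b i) u = ip a u - ip b u"
  by (simp add: ip_def algebra_simps sum_subtractf)
lemma ip_scale_r: "ip u (\<lambda>i. c * b i) = c * ip u b"
  by (simp add: ip_def algebra_simps sum_distrib_left)
lemma ip_scale_l: "ip (\<lambda>i. c * b i) u = cnj c * ip b u"
  by (simp add: ip_def algebra_simps sum_distrib_left)
lemma ip_cnj: "cnj (ip u w) = ip w u"
  by (simp add: ip_def mult.commute)
lemma ip_sum_r: "ip u (\<lambda>i. \<Sum>k\<in>F. c k * w k i) = (\<Sum>k\<in>F. c k * ip u (w k))"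
  by (simp add: ip_def sum_distrib_left sum_distrib_right mult_ac) (rule sum.swap)
lemma ip_sum_l: "ip (\<lambda>i. \<Sum>k\<in>F. c k * w k i) u = (\<Sum>k\<in>F. cnj (c k) * ip (w k) u)"
  by (simp add: ip_def sum_distrib_left sum_distrib_right mult_ac) (rule sum.swap)
lemma ip_zero_r[simp]: "ip u (\<lambda>i. 0) = 0" by (simp add: ip_def)
lemma ip_zero_l[simp]: "ip (\<lambda>i. 0) u = 0" by (simp add: ip_def)
lemma qf_zero[simp]: "qf A (\<lambda>i. 0) = 0" by (simp add: qf_def)
lemma qf_scale: "qf A (\<lambda>i. c * v i) = cnj c * c * qf A v"
  by (simp add: qf_def sum_distrib_left mult_ac)

lemma mv_idop[simp]: "mv idop v = v"
proof
  fix i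
  have "mv idop v i = (\<Sum>j\<in>UNIV. ee i j * v j)" unfolding mv_def idop_def ee_def
    by (rule sum.cong) auto
  thus "mv idop v i = v i" by simp
qed
lemma ip_ee: "ip u (ee i) = cnj (u i)" by (simp add: ip_def)
lemma qf_idop: "qf idop v = ip v v" by (simp add: qf_ip)

lemma ip_expand: "ip (\<lambda>i. x i + c * y i) (\<lambda>i. x i + c * y i) = ip x x + cnj c * ip y x + c * ip x y + cnj c * c * ip y y"
  using qf_expand[of idop x c y] by (simp add: qf_idop)

lemma quad_zero:
  fixes N c :: real
  assumes "\<And>t. 2 * t * N + t^2 * c \<le> 0" "N \<ge> 0" shows "N = 0"
proof (rule ccontr)
  assume "N \<noteq> 0" hence Np: "N > 0" using assms by auto
  define t where "t = N / (\<bar>c\<bar> + 1)"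
  have tp: "t > 0" using Np by (simp add: t_def)
  have "t * \<bar>c\<bar> < N" using Np by (simp add: t_def field_simps)
  moreover have "- (t * c) \<le> t * \<bar>c\<bar>" using tp by (simp add: abs_if)
  ultimately have "- (t * c) < 2 * N" using Np by linarith
  hence "0 < t * (2 * N + t * c)" using tp Np by (intro mult_pos_pos) (auto simp: abs_if split: if_splits)
  hence "0 < 2 * t * N + t^2 * c" by (simp add: algebra_simps power2_eq_square)
  thus False using assms(1)[of t] by simp
qed

definition proj :: "('a::finite \<Rightarrow> complex) set \<Rightarrow> ('a \<Rightarrow> complex) \<Rightarrow> ('a \<Rightarrow> complex)" where
  "proj B v = (\<lambda>i. \<Sum>u\<in>B. ip u v * u i)"

definition orthonormal :: "('a::finite \<Rightarrow> complex) set \<Rightarrow> bool" where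
  "orthonormal B \<longleftrightarrow> finite B \<and> (\<forall>u\<in>B. ip u u = 1) \<and> (\<forall>u\<in>B. \<forall>w\<in>B. u \<noteq> w \<longrightarrow> ip u w = 0)"

lemma orth_sum:
  assumes "orthonormal B" "w \<in> B"
  shows "(\<Sum>u\<in>B. c u * ip w u) = c w"
proof -
  have "(\<Sum>u\<in>B. c u * ip w u) = (\<Sum>u\<in>B. if u = w then c u else 0)"
    using assms unfolding orthonormal_def by (intro sum.cong) auto
  also have "... = c w" using assms unfolding orthonormal_def by (simp add: sum.delta)
  finally show ?thesis .
qed

lemma orth_sum':
  assumes "orthonormal B" "w \<in> B"
  shows "(\<Sum>u\<in>B. c u * ip u w) = c w"
proof -
  have "(\<Sum>u\<in>B. c u * ip u w) = (\<Sum>u\<in>B. if u = w then c u else 0)"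
    using assms unfolding orthonormal_def by (intro sum.cong) auto
  also have "... = c w" using assms unfolding orthonormal_def by (simp add: sum.delta)
  finally show ?thesis .
qed

lemma ip_proj: assumes "orthonormal B" "w \<in> B" shows "ip w (proj B v) = ip w v"
  unfolding proj_def ip_sum_r using orth_sum[OF assms] by simp

lemma ip_proj_proj: assumes "orthonormal B"
  shows "ip (proj B v) (proj B v) = (\<Sum>u\<in>B. cnj (ip u v) * ip u v)"
  unfolding proj_def[of B v] ip_sum_l
  by (rule sum.cong, simp, subst proj_def[symmetric], subst ip_proj[OF assms], auto)

lemma ip_proj_v: assumes "orthonormal B"
  shows "ip (proj B v) v = (\<Sum>u\<in>B. cnj (ip u v) * ip u v)"
  unfolding proj_def[of B v] ip_sum_l by simp

lemma bessel:
  assumes "orthonormal B"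
  shows "(\<Sum>u\<in>B. (cmod (ip u v))\<^sup>2) \<le> Re (ip v v)"
proof -
  define r where "r = (\<lambda>i. v i - proj B v i)"
  have s: "(\<Sum>u\<in>B. cnj (ip u v) * ip u v) = of_real (\<Sum>u\<in>B. (cmod (ip u v))\<^sup>2)"
    unfolding of_real_sum by (rule sum.cong) (simp_all only: complex_norm_square mult.commute)
  have "ip r r = ip v v - ip (proj B v) v - ip v (proj B v) + ip (proj B v) (proj B v)"
    unfolding r_def ip_diff_l ip_diff_r by simp
  also have "ip v (proj B v) = cnj (ip (proj B v) v)" by (simp add: ip_cnj)
  finally have "ip r r = ip v v - of_real (\<Sum>u\<in>B. (cmod (ip u v))\<^sup>2)"
    unfolding ip_proj_v[OF assms] ip_proj_proj[OF assms] s by simp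
  hence "Re (ip r r) = Re (ip v v) - (\<Sum>u\<in>B. (cmod (ip u v))\<^sup>2)" by simp
  thus ?thesis using ip_self_ge0[of r] by simp
qed

lemma orth_card:
  assumes "orthonormal (B :: ('a::finite \<Rightarrow> complex) set)"
  shows "card B \<le> CARD('a)"
proof -
  have fB: "finite B" using assms orthonormal_def by auto
  have "real (card B) = (\<Sum>u\<in>B. Re (ip u u))" using assms unfolding orthonormal_def by simp
  also have "... = (\<Sum>u\<in>B. \<Sum>i\<in>UNIV. (cmod (ip u (ee i)))\<^sup>2)"
    by (rule sum.cong) (simp_all add: ip_self_Re ip_ee)
  also have "... = (\<Sum>i\<in>UNIV. \<Sum>u\<in>B. (cmod (ip u (ee i)))\<^sup>2)" by (rule sum.swap)
  also have "... \<le> (\<Sum>i\<in>(UNIV::'a set). Re (ip (ee i) (ee i)))" by (rule sum_mono) (rule bessel[OF assms])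
  also have "... = real CARD('a)" by (simp add: ip_ee, simp add: ee_def)
  finally show ?thesis by simp
qed

definition eigsys :: "('a::finite) op \<Rightarrow> ('a \<Rightarrow> complex) set \<Rightarrow> (('a \<Rightarrow> complex) \<Rightarrow> real) \<Rightarrow> bool" where
  "eigsys A B lam \<longleftrightarrow> orthonormal B \<and> (\<forall>u\<in>B. mv A u = (\<lambda>i. of_real (lam u) * u i))"

lemma W_inv:
  assumes "herm A" "eigsys A B lam" "\<forall>u\<in>B. ip u v = 0"
  shows "\<forall>u\<in>B. ip u (mv A v) = 0"
proof
  fix u assume u: "u \<in> B"
  have "ip u (mv A v) = cnj (ip v (mv A u))" by (rule herm_ip[OF assms(1)])
  also have "... = cnj (of_real (lam u) * ip v u)" using assms(2) u unfolding eigsys_def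
    by (simp add: ip_scale_r)
  also have "... = of_real (lam u) * ip u v" by (simp add: ip_cnj)
  finally show "ip u (mv A v) = 0" using assms(3) u by simp
qed

lemma vnl[simp]: "vec_nth (vec_lambda f) = f" by (rule ext) simp

lemma norm_vec_ip: "norm (x::complex^'a::finite) = sqrt (Re (ip (vec_nth x) (vec_nth x)))"
  by (simp add: norm_vec_def L2_set_def ip_self_Re)

lemma cont_lin: "continuous_on UNIV (\<lambda>x::complex^'a::finite. \<Sum>i\<in>UNIV. c i * x $ i)"
  by (intro continuous_at_imp_continuous_on ballI) (simp add: isCont_def, intro tendsto_intros)

lemma cont_qf: "continuous_on UNIV (\<lambda>x::complex^'a::finite. Re (qf A (vec_nth x)))"
  unfolding qf_def
  by (intro continuous_at_imp_continuous_on ballI) (simp add: isCont_def, intro tendsto_intros)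

lemma rayleigh:
  fixes A :: "('a::finite) op"
  assumes h: "herm A" and es: "eigsys A B lam" and wW: "\<forall>b\<in>B. ip b w = 0" and w0: "w \<noteq> (\<lambda>i. 0)"
  shows "\<exists>u M. (\<forall>b\<in>B. ip b u = 0) \<and> ip u u = 1 \<and> mv A u = (\<lambda>i. of_real M * u i)"
proof -
  define Wp where "Wp x \<longleftrightarrow> (\<forall>b\<in>B. ip b x = 0)" for x
  define K where "K = sphere (0::complex^'a) 1 \<inter> (\<Inter>b\<in>B. {x. ip b (vec_nth x) = 0})"
  define f where "f x = Re (qf A (vec_nth x))" for x :: "complex^'a"
  have Kc: "compact K" unfolding K_def
  proof (rule compact_Int_closed)
    show "compact (sphere (0::complex^'a) 1)" by simp
    show "closed (\<Inter>b\<in>B. {x::complex^'a. ip b (vec_nth x) = 0})"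
    proof (rule closed_INT, intro ballI)
      fix b show "closed {x::complex^'a. ip b (vec_nth x) = 0}"
        by (rule closed_Collect_eq) (unfold ip_def, rule cont_lin, simp)
    qed
  qed
  have Kmem: "x \<in> K \<longleftrightarrow> Re (ip (vec_nth x) (vec_nth x)) = 1 \<and> Wp (vec_nth x)" for x
    unfolding K_def Wp_def by (auto simp: norm_vec_ip)
  define N where "N = Re (ip w w)"
  have Np: "N > 0" using ip_self_ge0[of w] ip_self_eq0[of w] w0 ip_self_Re(2)[of w]
    by (auto simp: N_def complex_eq_iff)
  have scale: "Re (ip (\<lambda>i. of_real (1 / sqrt (Re (ip v v))) * v i) (\<lambda>i. of_real (1 / sqrt (Re (ip v v))) * v i)) = 1"
    if "Re (ip v v) > 0" for v
  proof -
    have e: "ip v v = of_real (Re (ip v v))" using ip_self_Re(2)[of v] by (simp add: complex_eq_iff)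
    show ?thesis unfolding ip_scale_l ip_scale_r using that by (subst e) (simp add: field_simps)
  qed
  have Wp_scale: "Wp (\<lambda>i. c * v i)" if "Wp v" for c v using that by (simp add: Wp_def ip_scale_r)
  have Kne: "K \<noteq> {}"
  proof -
    let ?x = "vec_lambda (\<lambda>i. of_real (1 / sqrt N) * w i)"
    have "?x \<in> K" unfolding Kmem using scale[of w] Np wW Wp_scale[of w "of_real (1 / sqrt N)"] by (simp add: N_def Wp_def)
    thus ?thesis by auto
  qed
  obtain x1 where x1: "x1 \<in> K" "\<forall>y\<in>K. f y \<le> f x1"
    using continuous_attains_sup[OF Kc Kne, of f] cont_qf[of A] continuous_on_subset
    unfolding f_def by blast
  define u where "u = vec_nth x1"
  define M where "M = f x1"
  have uW: "Wp u" and uu: "Re (ip u u) = 1" using x1(1) unfolding Kmem u_def by auto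
  have uu1: "ip u u = 1" using uu ip_self_Re(2)[of u] by (simp add: complex_eq_iff)
  have bound: "Re (qf A v) \<le> M * Re (ip v v)" if "Wp v" for v
  proof (cases "v = (\<lambda>i. 0)")
    case True thus ?thesis by simp
  next
    case False
    define n where "n = Re (ip v v)"
    have np: "n > 0" using ip_self_ge0[of v] ip_self_eq0[of v] False ip_self_Re(2)[of v]
      by (auto simp: n_def complex_eq_iff)
    let ?y = "vec_lambda (\<lambda>i. of_real (1 / sqrt n) * v i)"
    have "?y \<in> K" unfolding Kmem using scale[of v] np that Wp_scale[of v "of_real (1 / sqrt n)"] by (simp add: n_def)
    hence "f ?y \<le> M" using x1 M_def by auto
    moreover have "f ?y = Re (qf A v) / n" using np
      unfolding f_def vnl qf_scale by (simp add: field_simps)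
    ultimately show ?thesis using np by (simp add: n_def field_simps)
  qed
  define r where "r = (\<lambda>i. mv A u i - of_real M * u i)"
  have rW: "Wp r" unfolding r_def Wp_def
    using W_inv[OF h es] uW by (simp add: Wp_def ip_diff_r ip_scale_r[where b=u, simplified])
  define c where "c = Re (qf A r) - M * Re (ip r r)"
  have "Re (ip r r) = 0"
  proof (rule quad_zero)
    show "0 \<le> Re (ip r r)" by (rule ip_self_ge0)
    fix t :: real
    define v where "v = (\<lambda>i. u i + of_real t * r i)"
    have vW: "Wp v" using uW rW by (simp add: Wp_def v_def ip_lin_r)
    have e1: "Re (ip u (mv A r)) = Re (ip r (mv A u))" using herm_ip[OF h, of u r] by simp
    have e2: "Re (ip u r) = Re (ip r u)" using arg_cong[OF ip_cnj[of r u], of Re] by simp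
    have e3: "ip r r = ip r (mv A u) - of_real M * ip r u"
      unfolding r_def by (simp add: ip_diff_r ip_scale_r[where b=u, simplified])
    have e4: "Re (ip r (mv A u)) = Re (ip r r) + M * Re (ip r u)"
      using arg_cong[OF e3, of Re] by simp
    have "Re (qf A v) - M * Re (ip v v) = 2 * t * Re (ip r r) + t^2 * c"
      unfolding v_def qf_expand ip_expand using e1 e2 e4 uu1
      by (simp add: c_def M_def f_def u_def[symmetric] algebra_simps power2_eq_square)
    moreover have "Re (qf A v) - M * Re (ip v v) \<le> 0" using bound[OF vW] by simp
    ultimately show "2 * t * Re (ip r r) + t^2 * c \<le> 0" by simp
  qed
  hence "ip r r = 0" using ip_self_Re(2)[of r] by (simp add: complex_eq_iff)
  hence "r = (\<lambda>i. 0)" using ip_self_eq0 by auto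
  hence "mv A u = (\<lambda>i. of_real M * u i)" unfolding r_def by (metis eq_iff_diff_eq_0)
  thus ?thesis using uW uu1 unfolding Wp_def by blast
qed

theorem spectral:
  fixes A :: "('a::finite) op"
  assumes h: "herm A"
  shows "\<exists>B lam. eigsys A B lam \<and> (\<forall>v. proj B v = v)"
proof -
  let ?P = "\<lambda>B. \<exists>lam. eigsys A B lam"
  have P0: "?P {}" by (auto simp: eigsys_def orthonormal_def)
  have bnd: "\<forall>B. ?P B \<longrightarrow> card B < CARD('a) + 1"
    using orth_card by (auto simp: eigsys_def less_Suc_eq_le)
  obtain B where PB: "?P B" and mx: "\<forall>B'. ?P B' \<longrightarrow> card B' \<le> card B"
    using ex_has_greatest_nat[OF P0 bnd] by blast
  obtain lam where es: "eigsys A B lam" using PB by blast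
  have on: "orthonormal B" using es eigsys_def by auto
  have "\<forall>v. proj B v = v"
  proof (rule ccontr)
    assume "\<not> (\<forall>v. proj B v = v)"
    then obtain v where v: "proj B v \<noteq> v" by blast
    define w where "w = (\<lambda>i. v i - proj B v i)"
    have wW: "\<forall>b\<in>B. ip b w = 0" unfolding w_def by (simp add: ip_diff_r ip_proj[OF on])
    have w0: "w \<noteq> (\<lambda>i. 0)" using v unfolding w_def by (metis eq_iff_diff_eq_0 ext)
    obtain u M where uW: "\<forall>b\<in>B. ip b u = 0" and uu: "ip u u = 1"
      and eu: "mv A u = (\<lambda>i. of_real M * u i)"
      using rayleigh[OF h es wW w0] by blast
    have uB: "u \<notin> B" using uW uu by force
    have "eigsys A (insert u B) (lam(u := M))"
      unfolding eigsys_def orthonormal_def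
    proof (intro conjI ballI impI)
      show "finite (insert u B)" using on orthonormal_def by auto
      fix x assume x: "x \<in> insert u B"
      show "ip x x = 1" using x uu on orthonormal_def by auto
      show "mv A x = (\<lambda>i. complex_of_real ((lam(u := M)) x) * x i)"
        using x eu es uB unfolding eigsys_def by auto
      fix y assume y: "y \<in> insert u B" "x \<noteq> y"
      show "ip x y = 0"
      proof (cases "x = u")
        case True thus ?thesis using y uW ip_cnj[of y u] by auto
      next
        case False
        show ?thesis
        proof (cases "y = u")
          case True thus ?thesis using x False uW by auto
        next
          case False thus ?thesis using x y \<open>x \<noteq> u\<close> on unfolding orthonormal_def by auto
        qed
      qed
    qed
    hence "card (insert u B) \<le> card B" using mx by blast
    moreover have "card (insert u B) = card B + 1" using uB on unfolding orthonormal_def by auto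
    ultimately show False by simp
  qed
  thus ?thesis using es by blast
qed

lemma mv_sum: "mv A (\<lambda>i. \<Sum>k\<in>F. c k * w k i) = (\<lambda>i. \<Sum>k\<in>F. c k * mv A (w k) i)"
  by (rule ext) (simp add: mv_def sum_distrib_left mult_ac, rule sum.swap)

lemma mv_scale: "mv A (\<lambda>i. c * w i) = (\<lambda>i. c * mv A w i)"
  by (rule ext) (simp add: mv_def sum_distrib_left mult.left_commute)

lemma mv_diff: "mv A (\<lambda>i. a i - b i) = (\<lambda>i. mv A a i - mv A b i)"
  by (rule ext) (simp add: mv_def right_diff_distrib sum_subtractf)

lemma mv_mmult: "mv (mmult X Y) v = mv X (mv Y v)"
  by (rule ext) (simp add: mv_def mmult_def sum_distrib_left sum_distrib_right mult.assoc, rule sum.swap)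

lemma mv_ee: "mv X (ee j) = (\<lambda>i. X i j)"
  by (simp add: mv_def)

lemma mat_eq_mv: "(\<And>v. mv X v = mv Y v) \<Longrightarrow> X = Y"
  by (metis mv_ee ext)

lemma mv_outer_sum: "mv (\<lambda>i j. \<Sum>u\<in>B. c u * u i * cnj (u j)) v = (\<lambda>i. \<Sum>u\<in>B. c u * ip u v * u i)"
proof
  fix i
  have "mv (\<lambda>i j. \<Sum>u\<in>B. c u * u i * cnj (u j)) v i = (\<Sum>j\<in>UNIV. \<Sum>u\<in>B. c u * u i * cnj (u j) * v j)"
    unfolding mv_def by (simp only: sum_distrib_right)
  also have "... = (\<Sum>u\<in>B. \<Sum>j\<in>UNIV. c u * u i * cnj (u j) * v j)" by (rule sum.swap)
  also have "... = (\<Sum>u\<in>B. c u * ip u v * u i)" unfolding ip_def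
    by (simp only: sum_distrib_left sum_distrib_right) (simp add: mult_ac)
  finally show "mv (\<lambda>i j. \<Sum>u\<in>B. c u * u i * cnj (u j)) v i = (\<Sum>u\<in>B. c u * ip u v * u i)" .
qed

lemma proj_mv: assumes "proj B v = v" shows "mv A v = (\<lambda>i. \<Sum>u\<in>B. ip u v * mv A u i)"
proof -
  have "mv A v = mv A (\<lambda>i. \<Sum>u\<in>B. ip u v * u i)" using assms unfolding proj_def by simp
  also have "... = (\<lambda>i. \<Sum>u\<in>B. ip u v * mv A u i)" by (rule mv_sum)
  finally show ?thesis .
qed

lemma herm_ip_l: assumes "herm R" shows "ip (mv R u) w = ip u (mv R w)"
proof -
  have "ip (mv R u) w = cnj (ip w (mv R u))" by (simp add: ip_cnj)
  also have "... = ip u (mv R w)" using herm_ip[OF assms, of w u] by simp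
  finally show ?thesis .
qed

lemma ip_sum_r': "ip x (\<lambda>i. \<Sum>u\<in>F. c u * u i) = (\<Sum>u\<in>F. c u * ip x u)"
  by (rule ip_sum_r)

definition sqm :: "('a::finite \<Rightarrow> complex) set \<Rightarrow> (('a \<Rightarrow> complex) \<Rightarrow> real) \<Rightarrow> 'a op" where
  "sqm B lam = (\<lambda>i j. \<Sum>u\<in>B. of_real (sqrt (lam u)) * u i * cnj (u j))"

theorem psd_sqrt:
  fixes A :: "('a::finite) op"
  assumes "psd A"
  shows "\<exists>!S. psd S \<and> mmult S S = A"
proof -
  have h: "herm A" using assms psd_herm by auto
  obtain B lam where es: "eigsys A B lam" and cp: "\<forall>v. proj B v = v" using spectral[OF h] by blast
  have on: "orthonormal B" using es eigsys_def by auto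
  have eu: "\<And>u. u \<in> B \<Longrightarrow> mv A u = (\<lambda>i. of_real (lam u) * u i)" using es eigsys_def by auto
  have lam0: "lam u \<ge> 0" if "u \<in> B" for u
  proof -
    have "qf A u = of_real (lam u)" using eu[OF that] on that
      by (simp add: qf_ip ip_scale_r[where b=u, simplified] orthonormal_def)
    thus ?thesis using assms by (metis psd_qf Re_complex_of_real)
  qed
  define S where "S = sqm B lam"
  have mvS: "mv S v = (\<lambda>i. \<Sum>u\<in>B. of_real (sqrt (lam u)) * ip u v * u i)" for v
    unfolding S_def sqm_def by (rule mv_outer_sum)
  have ipS: "ip u (mv S v) = of_real (sqrt (lam u)) * ip u v" if "u \<in> B" for u v
  proof -
    have "ip u (mv S v) = (\<Sum>w\<in>B. (of_real (sqrt (lam w)) * ip w v) * ip u w)"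
      unfolding mvS by (rule ip_sum_r')
    also have "... = of_real (sqrt (lam u)) * ip u v" by (rule orth_sum[OF on that])
    finally show ?thesis .
  qed
  have psdS: "psd S" unfolding psd_qf
  proof
    fix v
    have "qf S v = (\<Sum>u\<in>B. (of_real (sqrt (lam u)) * ip u v) * ip v u)"
      unfolding qf_ip mvS by (rule ip_sum_r')
    also have "... = (\<Sum>u\<in>B. of_real (sqrt (lam u) * (cmod (ip u v))\<^sup>2))"
    proof (rule sum.cong)
      fix u
      have "ip v u = cnj (ip u v)" by (simp add: ip_cnj)
      thus "of_real (sqrt (lam u)) * ip u v * ip v u = of_real (sqrt (lam u) * (cmod (ip u v))\<^sup>2)"
        by (simp only: of_real_mult complex_norm_square mult.assoc)
    qed simp
    finally have "qf S v = (\<Sum>u\<in>B. of_real (sqrt (lam u) * (cmod (ip u v))\<^sup>2))" .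
    thus "Im (qf S v) = 0 \<and> 0 \<le> Re (qf S v)" using lam0
      by (simp add: Re_sum Im_sum sum_nonneg del: of_real_mult of_real_power)
  qed
  have hS: "herm S" using psdS psd_herm by auto
  have SS: "mmult S S = A"
  proof (rule mat_eq_mv)
    fix v
    have "mv (mmult S S) v = (\<lambda>i. \<Sum>u\<in>B. of_real (sqrt (lam u)) * ip u (mv S v) * u i)"
      by (simp add: mv_mmult mvS)
    also have "... = (\<lambda>i. \<Sum>u\<in>B. ip u v * (of_real (lam u) * u i))"
      using lam0 by (intro ext sum.cong) (simp_all add: ipS mult_ac flip: of_real_mult)
    also have "... = mv A v" using proj_mv[OF cp[rule_format, of v], of A] eu by simp
    finally show "mv (mmult S S) v = mv A v" .
  qed
  have uniq: "R = S" if R: "psd R" "mmult R R = A" for R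
  proof (rule mat_eq_mv)
    have hR: "herm R" using R psd_herm by auto
    have Ru: "mv R u = (\<lambda>i. of_real (sqrt (lam u)) * u i)" if u: "u \<in> B" for u
    proof -
      define c where "c = sqrt (lam u)"
      have c0: "c \<ge> 0" using lam0[OF u] c_def by simp
      define z where "z = (\<lambda>i. mv R u i - of_real c * u i)"
      have RRu: "mv R (mv R u) = (\<lambda>i. of_real (lam u) * u i)" using eu[OF u] R(2) mv_mmult by metis
      have cc: "of_real c * of_real c = (of_real (lam u) :: complex)" using lam0[OF u] c_def
        by (simp flip: of_real_mult)
      have Rz: "mv R z = (\<lambda>i. - of_real c * z i)"
        unfolding z_def mv_diff mv_scale RRu using cc by (auto simp: algebra_simps)
      have "ip z (mv R z) = - of_real c * ip z z" unfolding Rz by (rule ip_scale_r)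
      hence re: "Re (ip z (mv R z)) = - c * Re (ip z z)" by simp
      have ge: "Re (ip z (mv R z)) \<ge> 0" using R(1) by (metis psd_qf qf_ip)
      show ?thesis
      proof (cases "c > 0")
        case True
        have "c * Re (ip z z) \<le> 0" using re ge by linarith
        hence "Re (ip z z) \<le> 0" using True by (simp add: mult_le_0_iff)
        hence "Re (ip z z) = 0" using ip_self_ge0[of z] by linarith
        hence "ip z z = 0" using ip_self_Re(2)[of z] by (simp add: complex_eq_iff)
        hence "z = (\<lambda>i. 0)" using ip_self_eq0 by blast
        thus ?thesis unfolding z_def c_def by (metis eq_iff_diff_eq_0 ext)
      next
        case False
        hence c: "c = 0" using c0 by simp
        have "ip (mv R u) (mv R u) = ip u (mv R (mv R u))" by (rule herm_ip_l[OF hR])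
        also have "... = 0" unfolding RRu using c cc by simp
        finally have "mv R u = (\<lambda>i. 0)" using ip_self_eq0 by blast
        thus ?thesis using c c_def by simp
      qed
    qed
    fix v
    show "mv R v = mv S v"
      unfolding proj_mv[OF cp[rule_format, of v], of R] mvS using Ru by (intro ext sum.cong) simp_all
  qed
  show ?thesis using psdS SS uniq by blast
qed

lemma msqrt:
  assumes "psd A" shows "psd (msqrt A)" "mmult (msqrt A) (msqrt A) = A"
  using theI'[OF psd_sqrt[OF assms]] unfolding msqrt_def by auto

definition Em :: "'a \<times> 'a \<Rightarrow> 'a op" where
  "Em p = (\<lambda>i j. if (i, j) = p then 1 else 0)"

lemma lin_add: "is_linear_map \<Phi> \<Longrightarrow> \<Phi> (\<lambda>i j. A i j + B i j) = (\<lambda>i j. \<Phi> A i j + \<Phi> B i j)"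
  by (simp add: is_linear_map_def)
lemma lin_scale: "is_linear_map \<Phi> \<Longrightarrow> \<Phi> (\<lambda>i j. c * A i j) = (\<lambda>i j. c * \<Phi> A i j)"
  by (simp add: is_linear_map_def)
lemma lin_zero: "is_linear_map \<Phi> \<Longrightarrow> \<Phi> (\<lambda>i j. 0) = (\<lambda>i j. 0)"
  using lin_scale[of \<Phi> 0 "\<lambda>i j. 0"] by simp

lemma lin_sum:
  assumes L: "is_linear_map \<Phi>" and F: "finite F"
  shows "\<Phi> (\<lambda>i j. \<Sum>k\<in>F. c k * M k i j) = (\<lambda>i j. \<Sum>k\<in>F. c k * \<Phi> (M k) i j)"
  using F
proof (induction F rule: finite_induct)
  case empty thus ?case using lin_zero[OF L] by simp
next
  case (insert x F)
  have "\<Phi> (\<lambda>i j. \<Sum>k\<in>insert x F. c k * M k i j) = \<Phi> (\<lambda>i j. c x * M x i j + (\<Sum>k\<in>F. c k * M k i j))"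
    using insert by simp
  also have "... = (\<lambda>i j. \<Phi> (\<lambda>i j. c x * M x i j) i j + \<Phi> (\<lambda>i j. \<Sum>k\<in>F. c k * M k i j) i j)"
    by (rule lin_add[OF L])
  also have "... = (\<lambda>i j. \<Sum>k\<in>insert x F. c k * \<Phi> (M k) i j)"
    using insert by (simp add: lin_scale[OF L])
  finally show ?case .
qed

lemma mat_expand: "(\<rho>::('a::finite) op) = (\<lambda>i j. \<Sum>p\<in>UNIV. \<rho> (fst p) (snd p) * Em p i j)"
proof (intro ext)
  fix i j
  have "(\<Sum>p\<in>UNIV. \<rho> (fst p) (snd p) * Em p i j) = (\<Sum>p\<in>UNIV. if p = (i,j) then \<rho> i j else 0)"
    by (rule sum.cong) (auto simp: Em_def)
  thus "\<rho> i j = (\<Sum>p\<in>UNIV. \<rho> (fst p) (snd p) * Em p i j)" by simp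
qed

lemma lin_expand:
  fixes \<Phi> :: "('a::finite) op \<Rightarrow> ('b::finite) op"
  assumes L: "is_linear_map \<Phi>"
  shows "\<Phi> \<rho> = (\<lambda>a b. \<Sum>p\<in>UNIV. \<rho> (fst p) (snd p) * \<Phi> (Em p) a b)"
proof -
  have "\<Phi> \<rho> = \<Phi> (\<lambda>i j. \<Sum>p\<in>UNIV. \<rho> (fst p) (snd p) * Em p i j)" by (subst mat_expand) simp
  also have "... = (\<lambda>a b. \<Sum>p\<in>UNIV. \<rho> (fst p) (snd p) * \<Phi> (Em p) a b)" by (rule lin_sum[OF L]) simp
  finally show ?thesis .
qed

lemma lin_eqI:
  fixes \<Phi> \<Psi> :: "('a::finite) op \<Rightarrow> ('b::finite) op"
  assumes "is_linear_map \<Phi>" "is_linear_map \<Psi>" "\<And>p. \<Phi> (Em p) = \<Psi> (Em p)"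
  shows "\<Phi> \<rho> = \<Psi> \<rho>"
  using lin_expand[OF assms(1), of \<rho>] lin_expand[OF assms(2), of \<rho>] assms(3) by simp

lemma psd_on_reindex:
  assumes b: "bij_betw h S T" and P: "psd_on S (\<lambda>x y. Z (h x) (h y))"
  shows "psd_on T Z"
  unfolding psd_on_def
proof
  fix v
  have "(\<Sum>i\<in>T. \<Sum>j\<in>T. cnj (v i) * Z i j * v j) = (\<Sum>x\<in>S. \<Sum>j\<in>T. cnj (v (h x)) * Z (h x) j * v j)"
    by (rule sum.reindex_bij_betw[OF b, symmetric])
  also have "... = (\<Sum>x\<in>S. \<Sum>y\<in>S. cnj (v (h x)) * Z (h x) (h y) * v (h y))"
    by (rule sum.cong[OF refl], rule sum.reindex_bij_betw[OF b, symmetric])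
  finally have "(\<Sum>i\<in>T. \<Sum>j\<in>T. cnj (v i) * Z i j * v j) = (\<Sum>x\<in>S. \<Sum>y\<in>S. cnj ((v \<circ> h) x) * Z (h x) (h y) * (v \<circ> h) y)"
    by simp
  moreover have "Im (\<Sum>x\<in>S. \<Sum>y\<in>S. cnj ((v \<circ> h) x) * Z (h x) (h y) * (v \<circ> h) y) = 0 \<and>
     Re (\<Sum>x\<in>S. \<Sum>y\<in>S. cnj ((v \<circ> h) x) * Z (h x) (h y) * (v \<circ> h) y) \<ge> 0"
    using spec[OF P[unfolded psd_on_def], of "v \<circ> h"] by simp
  ultimately show "Im (\<Sum>i\<in>T. \<Sum>j\<in>T. cnj (v i) * Z i j * v j) = 0 \<and> Re (\<Sum>i\<in>T. \<Sum>j\<in>T. cnj (v i) * Z i j * v j) \<ge> 0"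
    by simp
qed

lemma psd_reindex:
  fixes Z :: "('a::finite) op"
  assumes "bij h" "psd (\<lambda>x y. Z (h x) (h y))" shows "psd Z"
  using psd_on_reindex[of h UNIV UNIV Z] assms by (simp add: psd_def)

definition choi :: "(('a::finite) op \<Rightarrow> ('b::finite) op) \<Rightarrow> ('a \<times> 'b) op" where
  "choi \<Phi> = (\<lambda>(i, a) (j, b). \<Phi> (Em (i, j)) a b)"

lemma sum_prod_split: "(\<Sum>x\<in>A \<times> B. f x) = (\<Sum>a\<in>A. \<Sum>b\<in>B. f (a, b))"
  by (simp add: sum.cartesian_product)

lemma sum_UNIV_prod: "(\<Sum>p\<in>(UNIV::('a::finite \<times> 'b::finite) set). f p) = (\<Sum>a\<in>UNIV. \<Sum>b\<in>UNIV. f (a, b))"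
  by (simp add: sum_prod_split[symmetric])

lemma cp_choi:
  fixes \<Phi> :: "('a::finite) op \<Rightarrow> ('b::finite) op"
  assumes cp: "completely_positive \<Phi>"
  shows "psd (choi \<Phi>)"
proof -
  define n where "n = CARD('a)"
  obtain g where g: "bij_betw g {0..<n} (UNIV::'a set)"
    using ex_bij_betw_nat_finite[of "UNIV::'a set"] n_def by auto
  have g': "bij_betw g {..<n} UNIV" using g by (simp add: atLeast0LessThan)
  define X :: "(nat \<times> 'a) op" where
    "X = (\<lambda>(p, a) (q, a'). (if a = g p then 1 else 0) * (if a' = g q then 1 else 0))"
  have "psd_on ({..<n} \<times> UNIV) X" unfolding psd_on_def
  proof
    fix v :: "nat \<times> 'a \<Rightarrow> complex"
    define s where "s = (\<Sum>p\<in>{..<n}. v (p, g p))"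
    have inner: "(\<Sum>y\<in>{..<n} \<times> UNIV. X x y * v y) = (if snd x = g (fst x) then s else 0)" for x
      unfolding sum_prod_split s_def X_def
      by (cases x) (auto simp: if_distrib[of "\<lambda>t. t * _"] sum.delta' cong: if_cong)
    have "(\<Sum>x\<in>{..<n} \<times> UNIV. \<Sum>y\<in>{..<n} \<times> UNIV. cnj (v x) * X x y * v y)
        = (\<Sum>x\<in>{..<n} \<times> UNIV. cnj (v x) * (if snd x = g (fst x) then s else 0))"
      by (simp only: mult.assoc sum_distrib_left[symmetric] inner)
    also have "... = cnj s * s"
      unfolding sum_prod_split s_def by (simp add: sum_distrib_right if_distrib[of "\<lambda>t. _ * t"] sum.delta' cong: if_cong)
    finally show "Im (\<Sum>x\<in>{..<n} \<times> UNIV. \<Sum>y\<in>{..<n} \<times> UNIV. cnj (v x) * X x y * v y) = 0 \<and>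
       Re (\<Sum>x\<in>{..<n} \<times> UNIV. \<Sum>y\<in>{..<n} \<times> UNIV. cnj (v x) * X x y * v y) \<ge> 0"
      by simp
  qed
  hence A: "psd_on ({..<n} \<times> UNIV) (ampl \<Phi> X)" using cp unfolding completely_positive_def by blast
  have blk: "(\<lambda>a a'. X (p, a) (q, a')) = Em (g p, g q)" for p q
    by (auto simp: X_def Em_def)
  have "ampl \<Phi> X = (\<lambda>x y. choi \<Phi> ((\<lambda>(p, b). (g p, b)) x) ((\<lambda>(p, b). (g p, b)) y))"
    unfolding ampl_def choi_def blk by (auto intro!: ext)
  with A have "psd_on ({..<n} \<times> UNIV) (\<lambda>x y. choi \<Phi> ((\<lambda>(p, b). (g p, b)) x) ((\<lambda>(p, b). (g p, b)) y))" by simp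
  moreover have "bij_betw (map_prod g id) ({..<n} \<times> (UNIV::'b set)) (UNIV \<times> UNIV)"
    by (rule bij_betw_map_prod[OF g' bij_betw_id])
  moreover have "map_prod g id = (\<lambda>(p, b). (g p, b))" by (auto simp: map_prod_def)
  ultimately show ?thesis unfolding psd_def by (metis psd_on_reindex UNIV_Times_UNIV)
qed

lemma qf_outer_outer:
  "qf (outer u u) v = of_real ((cmod (ip u v))\<^sup>2)"
proof -
  have "qf (outer u u) v = (\<Sum>i\<in>UNIV. cnj (v i) * u i) * (\<Sum>j\<in>UNIV. cnj (u j) * v j)"
    unfolding qf_def outer_def sum_product by (intro sum.cong refl) (simp add: mult_ac)
  also have "... = cnj (ip u v) * ip u v" by (simp add: ip_def mult.commute)
  finally show ?thesis by (simp only: complex_norm_square mult.commute)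
qed

lemma psd_outer: "psd (outer u u)"
  unfolding psd_qf qf_outer_outer by simp

lemma trace_outer: "mtrace (outer u u) = ip u u"
  by (simp add: mtrace_def outer_def ip_def mult.commute)

lemma state_outer: "ip u u = 1 \<Longrightarrow> is_state (outer u u)"
  by (simp add: is_state_def psd_outer trace_outer)

lemma trace_psd: assumes "psd Z" shows "Im (mtrace Z) = 0" "Re (mtrace Z) \<ge> 0"
proof -
  have d: "Z a a = qf Z (ee a)" for a by (simp add: qf_def)
  have "Im (Z a a) = 0 \<and> Re (Z a a) \<ge> 0" for a using assms unfolding d psd_qf by blast
  thus "Im (mtrace Z) = 0" "Re (mtrace Z) \<ge> 0" by (auto simp: mtrace_def Re_sum Im_sum intro: sum_nonneg)
qed

lemma lin_pos:
  fixes \<Phi> :: "('a::finite) op \<Rightarrow> ('b::finite) op"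
  assumes L: "is_linear_map \<Phi>" and C: "psd (choi \<Phi>)"
  shows "psd (\<Phi> (outer u u))"
  unfolding psd_qf
proof
  fix w :: "'b \<Rightarrow> complex"
  define x where "x = (\<lambda>(j, b). cnj (u j) * w b)"
  define T where "T = (\<lambda>i a j b. cnj (w a) * u i * \<Phi> (Em (i, j)) a b * cnj (u j) * w b)"
  have "qf (\<Phi> (outer u u)) w = (\<Sum>a\<in>UNIV. \<Sum>b\<in>UNIV. \<Sum>i\<in>UNIV. \<Sum>j\<in>UNIV. T i a j b)"
    unfolding qf_def lin_expand[OF L, of "outer u u"] sum_UNIV_prod
    by (simp only: sum_distrib_left sum_distrib_right) (simp add: T_def outer_def mult_ac)
  also have "... = (\<Sum>i\<in>UNIV. \<Sum>a\<in>UNIV. \<Sum>j\<in>UNIV. \<Sum>b\<in>UNIV. T i a j b)"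
  proof -
    have "(\<Sum>a\<in>UNIV. \<Sum>b\<in>UNIV. \<Sum>i\<in>UNIV. \<Sum>j\<in>UNIV. T i a j b) = (\<Sum>a\<in>UNIV. \<Sum>i\<in>UNIV. \<Sum>b\<in>UNIV. \<Sum>j\<in>UNIV. T i a j b)"
      by (rule sum.cong[OF refl], rule sum.swap)
    also have "... = (\<Sum>i\<in>UNIV. \<Sum>a\<in>UNIV. \<Sum>b\<in>UNIV. \<Sum>j\<in>UNIV. T i a j b)" by (rule sum.swap)
    also have "... = (\<Sum>i\<in>UNIV. \<Sum>a\<in>UNIV. \<Sum>j\<in>UNIV. \<Sum>b\<in>UNIV. T i a j b)"
      by (rule sum.cong[OF refl], rule sum.cong[OF refl], rule sum.swap)
    finally show ?thesis .
  qed
  also have "... = qf (choi \<Phi>) x"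
    unfolding qf_def sum_UNIV_prod by (simp add: T_def x_def choi_def mult_ac)
  finally show "Im (qf (\<Phi> (outer u u)) w) = 0 \<and> 0 \<le> Re (qf (\<Phi> (outer u u)) w)"
    using C unfolding psd_qf by simp
qed

lemma trace_mmult_Em: "mtrace (mmult (A::('a::finite) op) (Em (j, i))) = A i j"
proof -
  have h: "(\<Sum>k\<in>UNIV. A a k * Em (j, i) k a) = (if a = i then A a j else 0)" for a
  proof (cases "a = i")
    case True
    have "(\<Sum>k\<in>UNIV. A a k * Em (j, i) k a) = (\<Sum>k\<in>UNIV. A a k * ee j k)"
      using True by (intro sum.cong) (auto simp: Em_def ee_def)
    thus ?thesis using True by simp
  qed (simp add: Em_def)
  show ?thesis unfolding mtrace_def mmult_def h by simp
qed

lemma trace_mmult_eq: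
  assumes "\<And>\<rho>. mtrace (mmult A \<rho>) = mtrace (mmult B \<rho>)" shows "A = B"
  using assms[of "Em (_, _)"] unfolding trace_mmult_Em by (intro ext) metis

lemma trace_mmult_outer: "mtrace (mmult A (outer u u)) = qf A u"
  unfolding mtrace_def mmult_def qf_def outer_def
  by (simp add: mult_ac)

lemma povm_ex:
  fixes \<Phi> :: "('a::finite) op \<Rightarrow> ('b::finite) op"
  assumes L: "is_linear_map \<Phi>"
  shows "\<exists>!A. \<forall>\<rho>. mtrace (mmult A \<rho>) = mtrace (\<Phi> \<rho>)"
proof (rule ex_ex1I)
  define A where "A = (\<lambda>i j. mtrace (\<Phi> (Em (j, i))))"
  have "mtrace (mmult A \<rho>) = mtrace (\<Phi> \<rho>)" for \<rho>
  proof -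
    have "mtrace (\<Phi> \<rho>) = (\<Sum>a\<in>UNIV. \<Sum>p\<in>UNIV. \<rho> (fst p) (snd p) * \<Phi> (Em p) a a)"
      unfolding mtrace_def by (subst lin_expand[OF L]) simp
    also have "... = (\<Sum>p\<in>UNIV. \<rho> (fst p) (snd p) * mtrace (\<Phi> (Em p)))"
      unfolding mtrace_def by (subst sum.swap) (simp add: sum_distrib_left)
    also have "... = (\<Sum>k\<in>UNIV. \<Sum>i\<in>UNIV. \<rho> k i * mtrace (\<Phi> (Em (k, i))))"
      by (simp add: sum_UNIV_prod)
    also have "... = mtrace (mmult A \<rho>)"
      unfolding mtrace_def mmult_def A_def by (subst sum.swap) (simp add: mult_ac)
    finally show ?thesis by simp
  qed
  thus "\<exists>A. \<forall>\<rho>. mtrace (mmult A \<rho>) = mtrace (\<Phi> \<rho>)" by blast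
next
  fix A B assume "\<forall>\<rho>. mtrace (mmult A \<rho>) = mtrace (\<Phi> \<rho>)" "\<forall>\<rho>. mtrace (mmult B \<rho>) = mtrace (\<Phi> \<rho>)"
  thus "A = B" by (intro trace_mmult_eq) simp
qed

lemma induced_povm_spec:
  assumes "is_linear_map (I x)"
  shows "mtrace (mmult (induced_povm I x) \<rho>) = mtrace (I x \<rho>)"
  using theI'[OF povm_ex[OF assms]] unfolding induced_povm_def by blast

lemma induced_povm_psd:
  assumes "is_linear_map (I x)" "completely_positive (I x)"
  shows "psd (induced_povm I x)"
  unfolding psd_qf
proof
  fix u
  have "qf (induced_povm I x) u = mtrace (I x (outer u u))"
    using induced_povm_spec[of I x, OF assms(1)] trace_mmult_outer by metis
  thus "Im (qf (induced_povm I x) u) = 0 \<and> 0 \<le> Re (qf (induced_povm I x) u)"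
    using trace_psd[OF lin_pos[OF assms(1) cp_choi[OF assms(2)]]] by simp
qed

lemma polar_outer:
  "outer u w = (\<lambda>a b. \<Sum>k\<in>{0..<4::nat}. (\<i>^k / 4) * outer (\<lambda>t. u t + \<i>^k * w t) (\<lambda>t. u t + \<i>^k * w t) a b)"
  by (intro ext) (simp add: outer_def eval_nat_numeral algebra_simps)

lemma Em_outer: "Em (i, j) = outer (ee i) (ee j)"
  by (intro ext) (simp add: Em_def outer_def ee_def)

lemma lin_outer_eq:
  fixes \<Phi> \<Psi> :: "('a::finite) op \<Rightarrow> ('b::finite) op"
  assumes L: "is_linear_map \<Phi>" "is_linear_map \<Psi>" and S: "\<And>\<rho>. is_state \<rho> \<Longrightarrow> \<Phi> \<rho> = \<Psi> \<rho>"
  shows "\<Phi> (outer u u) = \<Psi> (outer u u)"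
proof (cases "ip u u = 0")
  case True
  hence "u = (\<lambda>i. 0)" using ip_self_eq0 by blast
  hence "outer u u = (\<lambda>i j. 0)" by (simp add: outer_def)
  thus ?thesis using lin_zero[OF L(1)] lin_zero[OF L(2)] by simp
next
  case False
  define n where "n = Re (ip u u)"
  have np: "n > 0" using False ip_self_ge0[of u] ip_self_Re(2)[of u] by (auto simp: n_def complex_eq_iff)
  have e: "ip u u = of_real n" using ip_self_Re(2)[of u] by (simp add: n_def complex_eq_iff)
  define u' where "u' = (\<lambda>i. of_real (1 / sqrt n) * u i)"
  have sq: "complex_of_real (sqrt n) * complex_of_real (sqrt n) = of_real n"
    using np by (simp flip: of_real_mult)
  have "ip u' u' = 1" unfolding u'_def ip_scale_l ip_scale_r e using np sq by (simp add: field_simps)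
  hence st: "is_state (outer u' u')" by (rule state_outer)
  have "outer u u = (\<lambda>i j. of_real n * outer u' u' i j)"
    using np sq by (auto simp: outer_def u'_def field_simps intro!: ext)
  thus ?thesis using lin_scale[OF L(1)] lin_scale[OF L(2)] S[OF st] by simp
qed

lemma lin_state_eq:
  fixes \<Phi> \<Psi> :: "('a::finite) op \<Rightarrow> ('b::finite) op"
  assumes L: "is_linear_map \<Phi>" "is_linear_map \<Psi>" and S: "\<And>\<rho>. is_state \<rho> \<Longrightarrow> \<Phi> \<rho> = \<Psi> \<rho>"
  shows "\<Phi> \<rho> = \<Psi> \<rho>"
proof (rule lin_eqI[OF L])
  fix p :: "'a \<times> 'a"
  obtain i j where p: "p = (i, j)" by (cases p)
  show "\<Phi> (Em p) = \<Psi> (Em p)"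
    unfolding p Em_outer polar_outer[of "ee i"] lin_sum[OF L(1) finite_atLeastLessThan]
      lin_sum[OF L(2) finite_atLeastLessThan]
    by (intro ext sum.cong refl) (simp only: lin_outer_eq[OF L S])
qed

lemma sum_if_eq_r: "(\<Sum>v\<in>(UNIV::'a::finite set). F v * (if v = v0 then a else 0)) = F v0 * (a::complex)"
  by (simp add: if_distrib[of "\<lambda>t. _ * t"] sum.delta cong: if_cong)
lemma sum_if_eq_l: "(\<Sum>v\<in>(UNIV::'a::finite set). (if v = v0 then a else 0) * F v) = (a::complex) * F v0"
  by (simp add: if_distrib[of "\<lambda>t. t * _"] sum.delta cong: if_cong)

lemma swap3: "(\<Sum>a\<in>A. \<Sum>b\<in>B. \<Sum>c\<in>C. f a b c) = (\<Sum>b\<in>B. \<Sum>c\<in>C. \<Sum>a\<in>A. f a b c)"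
proof -
  have "(\<Sum>a\<in>A. \<Sum>b\<in>B. \<Sum>c\<in>C. f a b c) = (\<Sum>b\<in>B. \<Sum>a\<in>A. \<Sum>c\<in>C. f a b c)" by (rule sum.swap)
  also have "... = (\<Sum>b\<in>B. \<Sum>c\<in>C. \<Sum>a\<in>A. f a b c)" by (rule sum.cong[OF refl], rule sum.swap)
  finally show ?thesis .
qed

lemma mv_slice:
  fixes Z :: "(('p::finite) \<times> ('v::finite)) op"
  shows "mv Z (\<lambda>(p, v). if v = v0 then k p else 0) (q, w) = (\<Sum>p'\<in>UNIV. Z (q, w) (p', v0) * k p')"
  unfolding mv_def sum_UNIV_prod by (simp add: sum_if_eq_r)

lemma qf_slice:
  fixes Z :: "(('p::finite) \<times> ('v::finite)) op"
  shows "qf Z (\<lambda>(p, v). if v = v0 then k p else 0) = (\<Sum>p\<in>UNIV. \<Sum>p'\<in>UNIV. cnj (k p) * Z (p, v0) (p', v0) * k p')"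
proof -
  have "qf Z (\<lambda>(p, v). if v = v0 then k p else 0) =
        (\<Sum>p\<in>UNIV. \<Sum>v\<in>UNIV. cnj (if v = v0 then k p else 0) * (\<Sum>p'\<in>UNIV. \<Sum>v'\<in>UNIV. Z (p, v) (p', v') * (if v' = v0 then k p' else 0)))"
    unfolding qf_def sum_UNIV_prod by (simp add: sum_distrib_left mult.assoc)
  also have "... = (\<Sum>p\<in>UNIV. \<Sum>v\<in>UNIV. (if v = v0 then cnj (k p) else 0) * (\<Sum>p'\<in>UNIV. Z (p, v) (p', v0) * k p'))"
    by (simp only: sum_if_eq_r) (simp add: if_distrib[of cnj] cong: if_cong)
  also have "... = (\<Sum>p\<in>UNIV. cnj (k p) * (\<Sum>p'\<in>UNIV. Z (p, v0) (p', v0) * k p'))"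
    by (simp only: sum_if_eq_l)
  finally show ?thesis by (simp add: sum_distrib_left mult.assoc)
qed

lemma sum_nonneg_zero2:
  fixes Q :: "'a \<Rightarrow> 'b \<Rightarrow> real"
  assumes "finite A" "finite B" "\<And>a b. Q a b \<ge> 0" "(\<Sum>a\<in>A. \<Sum>b\<in>B. Q a b) = 0" "a \<in> A" "b \<in> B"
  shows "Q a b = 0"
proof -
  have "\<forall>a\<in>A. (\<Sum>b\<in>B. Q a b) = 0" using assms by (subst sum_nonneg_eq_0_iff[symmetric]) (auto intro: sum_nonneg)
  hence "(\<Sum>b\<in>B. Q a b) = 0" using assms by auto
  thus ?thesis using assms sum_nonneg_eq_0_iff by blast
qed

lemma qf_zero_from_psd:
  assumes "psd Z" "Re (qf Z x) = 0" shows "mv Z x = (\<lambda>i. 0)"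
  using assms psd_qf_zero[OF assms(1)] by (metis complex_eq_iff psd_qf zero_complex.sel)

lemma qf_tensor:
  fixes a b :: "('p::finite) \<Rightarrow> complex" and W :: "('v::finite) op"
  shows "qf (\<lambda>(q, w) (p, v). a q * cnj (a p) * W w v) (\<lambda>(p, v). b p * y v) = ip b a * ip a b * qf W y"
proof -
  have "qf (\<lambda>(q, w) (p, v). a q * cnj (a p) * W w v) (\<lambda>(p, v). b p * y v) =
    (\<Sum>q\<in>UNIV. \<Sum>w\<in>UNIV. \<Sum>p\<in>UNIV. \<Sum>v\<in>UNIV. (cnj (b q) * a q) * (cnj (a p) * b p) * (cnj (y w) * W w v * y v))"
    unfolding qf_def sum_UNIV_prod by (simp add: mult_ac)
  also have "... = (\<Sum>w\<in>UNIV. \<Sum>q\<in>UNIV. \<Sum>p\<in>UNIV. \<Sum>v\<in>UNIV. (cnj (b q) * a q) * (cnj (a p) * b p) * (cnj (y w) * W w v * y v))"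
    by (rule sum.swap)
  also have "... = (\<Sum>w\<in>UNIV. \<Sum>q\<in>UNIV. \<Sum>v\<in>UNIV. \<Sum>p\<in>UNIV. (cnj (b q) * a q) * (cnj (a p) * b p) * (cnj (y w) * W w v * y v))"
    by (rule sum.cong[OF refl], rule sum.cong[OF refl], rule sum.swap)
  also have "... = (\<Sum>w\<in>UNIV. \<Sum>v\<in>UNIV. \<Sum>q\<in>UNIV. \<Sum>p\<in>UNIV. (cnj (b q) * a q) * (cnj (a p) * b p) * (cnj (y w) * W w v * y v))"
    by (rule sum.cong[OF refl], rule sum.swap)
  also have "... = (\<Sum>w\<in>UNIV. \<Sum>v\<in>UNIV. \<Sum>p\<in>UNIV. \<Sum>q\<in>UNIV. (cnj (b q) * a q) * (cnj (a p) * b p) * (cnj (y w) * W w v * y v))"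
    by (rule sum.cong[OF refl], rule sum.cong[OF refl], rule sum.swap)
  also have "... = ip b a * ip a b * qf W y"
    unfolding ip_def qf_def by (simp only: sum_distrib_left sum_distrib_right)
  finally show ?thesis .
qed

lemma factor:
  fixes Z :: "('z::finite) \<Rightarrow> (('p::finite) \<times> ('v::finite)) op" and s :: "'p \<Rightarrow> complex"
  assumes ps: "\<And>z. psd (Z z)"
    and tr: "\<And>p p'. (\<Sum>z\<in>UNIV. \<Sum>v\<in>UNIV. Z z (p, v) (p', v)) = s p * cnj (s p')"
  shows "\<exists>\<omega>. psd \<omega> \<and> Z z0 = (\<lambda>(p, v) (p', v'). s p * cnj (s p') * \<omega> v v')"
proof -
  have kill: "(\<Sum>p'\<in>UNIV. Z z0 (q, w) (p', v0) * k p') = 0" if k: "ip s k = 0" for k q w v0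
  proof -
    define x where "x = (\<lambda>v0. (\<lambda>(p, v). if v = v0 then k p else 0) :: 'p \<times> 'v \<Rightarrow> complex)"
    define Q where "Q = (\<lambda>z v0. Re (qf (Z z) (x v0)))"
    have Q0: "Q z v \<ge> 0" for z v using ps unfolding Q_def psd_qf by blast
    have "(\<Sum>z\<in>UNIV. \<Sum>v0\<in>UNIV. qf (Z z) (x v0)) = (\<Sum>z\<in>UNIV. \<Sum>v0\<in>UNIV. \<Sum>p\<in>UNIV. \<Sum>p'\<in>UNIV. cnj (k p) * Z z (p, v0) (p', v0) * k p')"
      unfolding x_def qf_slice ..
    also have "... = (\<Sum>z\<in>UNIV. \<Sum>p\<in>UNIV. \<Sum>p'\<in>UNIV. \<Sum>v0\<in>UNIV. cnj (k p) * Z z (p, v0) (p', v0) * k p')"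
      by (rule sum.cong[OF refl], rule swap3)
    also have "... = (\<Sum>p\<in>UNIV. \<Sum>p'\<in>UNIV. cnj (k p) * (\<Sum>z\<in>UNIV. \<Sum>v\<in>UNIV. Z z (p, v) (p', v)) * k p')"
      by (subst swap3) (simp only: sum_distrib_left sum_distrib_right)
    also have "... = cnj (ip s k) * ip s k"
      unfolding tr by (simp add: ip_def sum_distrib_left sum_distrib_right mult_ac)
    finally have "(\<Sum>z\<in>UNIV. \<Sum>v0\<in>UNIV. Q z v0) = 0" using k unfolding Q_def by (simp flip: Re_sum)
    hence "Q z0 v0 = 0" by (rule sum_nonneg_zero2[OF finite finite Q0]) simp_all
    hence "mv (Z z0) (x v0) = (\<lambda>i. 0)" unfolding Q_def by (rule qf_zero_from_psd[OF ps])
    hence "mv (Z z0) (x v0) (q, w) = 0" by simp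
    thus ?thesis unfolding x_def mv_slice .
  qed
  show ?thesis
  proof (cases "s = (\<lambda>p. 0)")
    case True
    have "Z z0 (q, w) (p, v) = 0" for q w p v
    proof -
      have "ip s (ee p) = 0" using True by (simp add: ip_def)
      from kill[OF this, of q w v] show ?thesis by simp
    qed
    hence z: "Z z0 = (\<lambda>(p, v) (p', v'). s p * cnj (s p') * (\<lambda>(_::'v) (_::'v). 0::complex) v v')" by (auto intro!: ext)
    have ps0: "psd (\<lambda>(_::'v) (_::'v). 0::complex)" by (simp add: psd_qf qf_def)
    show ?thesis apply (rule exI[of _ "\<lambda>(_::'v) (_::'v). 0::complex"]) using z ps0 by simp
  next
    case False
    define N where "N = ip s s"
    have N0: "N \<noteq> 0" using False ip_self_eq0[of s] unfolding N_def by simp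
    have NR: "cnj N = N" using ip_self_Re(2)[of s] by (simp add: N_def complex_eq_iff)
    define Y where "Y = (\<lambda>q w v. \<Sum>p'\<in>UNIV. Z z0 (q, w) (p', v) * s p')"
    have h: "herm (Z z0)" using ps[of z0] by (rule psd_herm)
    have col: "Z z0 (q, w) (p, v) = cnj (s p) / N * Y q w v" for q w p v
    proof -
      define k where "k = (\<lambda>t. ee p t - (cnj (s p) / N) * s t)"
      have "ip s k = 0" unfolding k_def ip_diff_r ip_scale_r ip_ee using N0 by (simp add: N_def)
      from kill[OF this, of q w v]
      have "(\<Sum>p'\<in>UNIV. Z z0 (q, w) (p', v) * ee p p') - cnj (s p) / N * Y q w v = 0"
        unfolding k_def Y_def by (simp add: algebra_simps sum_subtractf sum_distrib_left)
      thus ?thesis by simp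
    qed
    have row: "Z z0 (q, w) (p, v) = s q / N * cnj (Y p v w)" for q w p v
    proof -
      have "Z z0 (q, w) (p, v) = cnj (Z z0 (p, v) (q, w))" using h unfolding herm_def by blast
      also have "... = s q / N * cnj (Y p v w)" unfolding col[of p v q w] using NR by simp
      finally show ?thesis .
    qed
    define D where "D = (\<lambda>w v. (\<Sum>p'\<in>UNIV. cnj (Y p' v w) * s p') / N)"
    have Yq: "Y q w v = (\<Sum>p'\<in>UNIV. Z z0 (q, w) (p', v) * s p')" for q w v by (simp add: Y_def)
    have Yf: "Y q w v = s q * D w v" for q w v
    proof -
      have "Y q w v = (\<Sum>p'\<in>UNIV. s q / N * cnj (Y p' v w) * s p')"
        by (subst Yq, rule sum.cong[OF refl], subst row, rule refl)
      also have "... = s q * D w v"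
        by (simp only: D_def sum_divide_distrib sum_distrib_left) (rule sum.cong[OF refl], simp add: divide_inverse mult_ac)
      finally show ?thesis .
    qed
    define \<omega> where "\<omega> = (\<lambda>w v. D w v / N)"
    have Zf: "Z z0 = (\<lambda>(p, v) (p', v'). s p * cnj (s p') * \<omega> v v')"
      by (auto intro!: ext simp: col Yf \<omega>_def)
    have "psd \<omega>" unfolding psd_qf
    proof
      fix y
      have "qf (Z z0) (\<lambda>(p, v). s p * y v) = N * N * qf \<omega> y"
        unfolding Zf qf_tensor N_def ..
      hence "qf \<omega> y = qf (Z z0) (\<lambda>(p, v). s p * y v) / (N * N)" using N0 by simp
      moreover have "N * N = of_real ((Re N)^2)" using NR by (simp add: complex_eq_iff power2_eq_square)
      moreover have "Im (qf (Z z0) (\<lambda>(p, v). s p * y v)) = 0 \<and> Re (qf (Z z0) (\<lambda>(p, v). s p * y v)) \<ge> 0"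
        using ps unfolding psd_qf by blast
      ultimately show "Im (qf \<omega> y) = 0 \<and> 0 \<le> Re (qf \<omega> y)" by (simp add: Re_divide Im_divide)
    qed
    thus ?thesis apply - apply (rule exI[of _ \<omega>]) using Zf by simp
  qed
qed

lemma psd_diag: assumes "psd W" shows "Im (W b b) = 0" "Re (W b b) \<ge> 0"
proof -
  have "W b b = qf W (ee b)" by (simp add: qf_def)
  thus "Im (W b b) = 0" "Re (W b b) \<ge> 0" using assms unfolding psd_qf by metis+
qed

lemma rank_one:
  fixes S :: "('h::finite) op" and W :: "('y::finite) \<Rightarrow> ('v::finite) op" and W' :: "'y \<Rightarrow> 'h op" and T :: "'y \<Rightarrow> 'v \<Rightarrow> 'h \<Rightarrow> complex"
  assumes H1: "\<And>y i j a b a' b'. S a i * cnj (S a' j) * W y b b' = T y b i * cnj (T y b' j) * W' y a a'"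
    and H2: "\<And>y. psd (W y)"
    and H3: "\<And>i a a'. (\<Sum>y\<in>UNIV. \<Sum>b\<in>UNIV. S a i * cnj (S a' i) * W y b b) = S a i * cnj (S a' i)"
    and H4: "psd S" "mmult S S = A"
  shows "\<exists>\<alpha>. A = outer \<alpha> \<alpha>"
proof -
  have hS: "herm S" using H4(1) by (rule psd_herm)
  have Aform: "A a a' = (\<Sum>i\<in>UNIV. S a i * cnj (S a' i))" for a a'
  proof -
    have "A a a' = mmult S S a a'" using H4(2) by simp
    also have "... = (\<Sum>i\<in>UNIV. S a i * cnj (S a' i))" unfolding mmult_def by (simp add: herm_cnj[OF hS])
    finally show ?thesis .
  qed
  show ?thesis
  proof (cases "\<forall>a i. S a i = 0")
    case True
    hence "A = outer (\<lambda>_. 0) (\<lambda>_. 0)" by (auto intro!: ext simp: Aform outer_def)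
    thus ?thesis by blast
  next
    case False
    then obtain a0 i0 where ai: "S a0 i0 \<noteq> 0" by blast
    have e: "(\<Sum>y\<in>UNIV. \<Sum>b\<in>UNIV. S a0 i0 * cnj (S a0 i0) * W y b b) = (S a0 i0 * cnj (S a0 i0)) * (\<Sum>y\<in>UNIV. \<Sum>b\<in>UNIV. W y b b)"
      by (simp only: sum_distrib_left)
    have "(S a0 i0 * cnj (S a0 i0)) * (\<Sum>y\<in>UNIV. \<Sum>b\<in>UNIV. W y b b) = (S a0 i0 * cnj (S a0 i0)) * 1"
      using H3[of a0 i0 a0] unfolding e by simp
    moreover have "S a0 i0 * cnj (S a0 i0) \<noteq> 0" using ai by simp
    ultimately have "(\<Sum>y\<in>UNIV. \<Sum>b\<in>UNIV. W y b b) = 1" by (metis mult_left_cancel)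
    then obtain y b0 where yb: "W y b0 b0 \<noteq> 0"
      by (metis (no_types, lifting) sum.neutral zero_neq_one)
    define r where "r = Re (W y b0 b0)"
    have Wr: "W y b0 b0 = of_real r" using psd_diag[OF H2[of y]] by (simp add: r_def complex_eq_iff)
    have rp: "r > 0" using psd_diag(2)[OF H2[of y], of b0] yb Wr by (cases "r = 0") auto
    define c where "c = (\<lambda>i. (cmod (T y b0 i))\<^sup>2 / r)"
    have c0: "c i \<ge> 0" for i using rp by (simp add: c_def)
    have col: "S a i * cnj (S a' i) = of_real (c i) * W' y a a'" for a a' i
    proof -
      have "S a i * cnj (S a' i) * of_real r = T y b0 i * cnj (T y b0 i) * W' y a a'"
        using H1[where y=y and i=i and j=i and a=a and b=b0 and a'=a' and b'=b0] Wr by simp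
      also have "T y b0 i * cnj (T y b0 i) = of_real ((cmod (T y b0 i))\<^sup>2)"
        by (simp only: complex_norm_square)
      finally show ?thesis using rp by (simp add: c_def field_simps)
    qed
    define C where "C = (\<Sum>i\<in>UNIV. c i)"
    have AC: "A a a' = of_real C * W' y a a'" for a a'
      unfolding Aform col C_def by (simp add: sum_distrib_right)
    show ?thesis
    proof (cases "C = 0")
      case True
      hence "A = outer (\<lambda>_. 0) (\<lambda>_. 0)" by (auto intro!: ext simp: AC outer_def)
      thus ?thesis by blast
    next
      case False
      then obtain i1 where i1: "c i1 \<noteq> 0" unfolding C_def by (metis sum.neutral)
      hence c1: "c i1 > 0" using c0[of i1] by simp
      have C0: "C \<ge> 0" unfolding C_def by (rule sum_nonneg) (rule c0)
      define \<alpha> where "\<alpha> = (\<lambda>a. of_real (sqrt (C / c i1)) * S a i1)"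
      have "A a a' = outer \<alpha> \<alpha> a a'" for a a'
      proof -
        have W': "W' y a a' = S a i1 * cnj (S a' i1) / of_real (c i1)" using col[of a i1 a'] c1 by simp
        have sq: "of_real (sqrt (C / c i1)) * of_real (sqrt (C / c i1)) = (of_real (C / c i1) :: complex)"
          using C0 c1 by (simp flip: of_real_mult)
        show ?thesis unfolding AC W' outer_def \<alpha>_def using sq c1
          by (simp add: field_simps)
      qed
      thus ?thesis by (intro exI[of _ \<alpha>]) (auto intro!: ext)
    qed
  qed
qed

lemma choi_apply: "choi \<Phi> (i, a) (j, b) = \<Phi> (Em (i, j)) a b"
  by (simp add: choi_def)

lemma measure_prepare:
  fixes \<Phi> :: "('a::finite) op \<Rightarrow> ('b::finite) op"
  assumes L: "is_linear_map \<Phi>" and C: "completely_positive \<Phi>"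
    and tr: "\<And>\<rho>. mtrace (\<Phi> \<rho>) = mtrace (mmult (outer \<alpha> \<alpha>) \<rho>)"
  shows "\<exists>\<sigma>. is_state \<sigma> \<and> (\<forall>\<rho>. \<Phi> \<rho> = (\<lambda>a b. mtrace (mmult (outer \<alpha> \<alpha>) \<rho>) * \<sigma> a b))"
proof -
  define t where "t = (\<lambda>\<rho>. mtrace (mmult (outer \<alpha> \<alpha>) \<rho>))"
  have cps: "psd (choi \<Phi>)" by (rule cp_choi[OF C])
  define s where "s = (\<lambda>i. cnj (\<alpha> i))"
  have trc: "(\<Sum>z\<in>(UNIV::unit set). \<Sum>b\<in>UNIV. (\<lambda>_. choi \<Phi>) z (i, b) (j, b)) = s i * cnj (s j)" for i j
  proof -
    have "(\<Sum>z\<in>(UNIV::unit set). \<Sum>b\<in>UNIV. (\<lambda>_. choi \<Phi>) z (i, b) (j, b)) = mtrace (\<Phi> (Em (i, j)))"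
      by (simp add: choi_apply mtrace_def)
    also have "... = outer \<alpha> \<alpha> j i" unfolding tr trace_mmult_Em ..
    finally show ?thesis by (simp add: outer_def s_def mult.commute)
  qed
  obtain \<omega> where p\<omega>: "psd \<omega>" and cf: "choi \<Phi> = (\<lambda>(p, v) (p', v'). s p * cnj (s p') * \<omega> v v')"
    using factor[of "\<lambda>_::unit. choi \<Phi>" s "()"] cps trc by blast
  have PE: "\<Phi> (Em (i, j)) a b = cnj (\<alpha> i) * \<alpha> j * \<omega> a b" for i j a b
    using fun_cong[OF fun_cong[OF cf, of "(i, a)"], of "(j, b)"] by (simp add: choi_apply s_def)
  have PE': "\<Phi> (Em p) a b = cnj (\<alpha> (fst p)) * \<alpha> (snd p) * \<omega> a b" for p a b
    using PE[of "fst p" "snd p"] by simp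
  have tform: "t \<rho> = (\<Sum>p\<in>UNIV. \<rho> (fst p) (snd p) * (cnj (\<alpha> (fst p)) * \<alpha> (snd p)))" for \<rho>
    unfolding t_def mtrace_def mmult_def outer_def sum_UNIV_prod
    by (subst sum.swap) (simp add: mult_ac)
  have Pf: "\<Phi> \<rho> = (\<lambda>a b. t \<rho> * \<omega> a b)" for \<rho>
    unfolding lin_expand[OF L, of \<rho>] tform
    by (intro ext) (simp add: PE' sum_distrib_left mult_ac)
  show ?thesis
  proof (cases "\<exists>\<rho>. t \<rho> \<noteq> 0")
    case True
    then obtain \<rho> where r: "t \<rho> \<noteq> 0" by blast
    have "t \<rho> * mtrace \<omega> = t \<rho> * 1" using tr[of \<rho>] unfolding Pf by (simp add: mtrace_def t_def sum_distrib_left)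
    hence "mtrace \<omega> = 1" using r by (metis mult_left_cancel)
    hence "is_state \<omega>" using p\<omega> by (simp add: is_state_def)
    thus ?thesis using Pf unfolding t_def by blast
  next
    case False
    obtain b0 :: 'b where True by blast
    have "ip (ee b0) (ee b0) = 1" unfolding ip_ee by (simp add: ee_def)
    hence st: "is_state (outer (ee b0) (ee b0))" by (rule state_outer)
    have "\<forall>\<rho>. \<Phi> \<rho> = (\<lambda>a b. t \<rho> * outer (ee b0) (ee b0) a b)" using False Pf by simp
    thus ?thesis using st unfolding t_def by blast
  qed
qed

lemma psd_reindex2:
  fixes Z :: "('a::finite) op" and h :: "'b::finite \<Rightarrow> 'a"
  assumes b: "bij h" and P: "psd Z" shows "psd (\<lambda>x y. Z (h x) (h y))"
proof -
  have bi: "bij (inv h)" using b by (rule bij_imp_bij_inv)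
  have "(\<lambda>x y. (\<lambda>x y. Z (h x) (h y)) (inv h x) (inv h y)) = Z"
    using b by (auto simp: bij_def surj_f_inv_f)
  with P show ?thesis using psd_reindex[OF bi, of "\<lambda>x y. Z (h x) (h y)"] by simp
qed

lemma psd_sqrt_ex: assumes "psd C" obtains R where "psd R" "herm R" "mmult R R = C"
  using msqrt[OF assms] psd_herm by blast

lemma trace_psd_prod:
  fixes C \<rho> :: "('a::finite) op"
  assumes C: "psd C" and r: "psd \<rho>"
  shows "Im (mtrace (mmult C \<rho>)) = 0" "Re (mtrace (mmult C \<rho>)) \<ge> 0"
proof -
  obtain R where R: "psd R" "herm R" "mmult R R = C" using psd_sqrt_ex[OF C] by blast
  have "mtrace (mmult C \<rho>) = (\<Sum>m\<in>UNIV. qf \<rho> (\<lambda>i. R i m))"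
  proof -
    have "mtrace (mmult C \<rho>) = (\<Sum>i\<in>UNIV. \<Sum>k\<in>UNIV. \<Sum>m\<in>UNIV. R i m * R m k * \<rho> k i)"
      unfolding mtrace_def mmult_def R(3)[symmetric] by (simp add: sum_distrib_right)
    also have "... = (\<Sum>m\<in>UNIV. \<Sum>i\<in>UNIV. \<Sum>k\<in>UNIV. R i m * R m k * \<rho> k i)"
      by (rule swap3[symmetric])
    also have "... = (\<Sum>m\<in>UNIV. \<Sum>k\<in>UNIV. \<Sum>i\<in>UNIV. R i m * R m k * \<rho> k i)"
      by (rule sum.cong[OF refl], rule sum.swap)
    also have "... = (\<Sum>m\<in>UNIV. qf \<rho> (\<lambda>i. R i m))"
      unfolding qf_def by (simp add: herm_cnj[OF R(2)] mult_ac)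
    finally show ?thesis .
  qed
  thus "Im (mtrace (mmult C \<rho>)) = 0" "Re (mtrace (mmult C \<rho>)) \<ge> 0"
    using r unfolding psd_qf by (auto simp: Im_sum Re_sum intro: sum_nonneg)
qed

definition qfS :: "'a set \<Rightarrow> 'a op \<Rightarrow> ('a \<Rightarrow> complex) \<Rightarrow> complex" where
  "qfS S M v = (\<Sum>p\<in>S. \<Sum>q\<in>S. cnj (v p) * M p q * v q)"

lemma psd_on_qfS: "psd_on S M \<longleftrightarrow> (\<forall>v. Im (qfS S M v) = 0 \<and> Re (qfS S M v) \<ge> 0)"
  by (simp add: psd_on_def qfS_def)

lemma psd_on_sumI:
  assumes "finite F" "\<And>v. qfS S M v = (\<Sum>m\<in>F. qfS T X (w v m))" "psd_on T X"
  shows "psd_on S M"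
  unfolding psd_on_qfS
proof
  fix v
  have "\<And>m. Im (qfS T X (w v m)) = 0 \<and> Re (qfS T X (w v m)) \<ge> 0" using assms(3) unfolding psd_on_qfS by blast
  thus "Im (qfS S M v) = 0 \<and> Re (qfS S M v) \<ge> 0" unfolding assms(2)
    by (auto simp: Im_sum Re_sum intro: sum_nonneg)
qed

lemma psd_on_tensor:
  fixes M :: "'p op" and W :: "('a::finite) op"
  assumes M: "psd_on S M" and W: "psd W" and fS: "finite S"
  shows "psd_on (S \<times> UNIV) (\<lambda>(p, a) (q, a'). M p q * W a a')"
proof -
  obtain R where R: "psd R" "herm R" "mmult R R = W" using psd_sqrt_ex[OF W] by blast
  define w :: "('p \<times> 'a \<Rightarrow> complex) \<Rightarrow> 'a \<Rightarrow> 'p \<Rightarrow> complex" where "w = (\<lambda>v m q. \<Sum>a'\<in>UNIV. R m a' * v (q, a'))"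
  define T where "T = (\<lambda>v p a q a' m. cnj (v (p, a)) * M p q * R a m * R m a' * v (q, a'))"
  show ?thesis
  proof (rule psd_on_sumI[OF finite _ M, where w=w])
    fix v
    have "qfS (S \<times> UNIV) (\<lambda>(p, a) (q, a'). M p q * W a a') v = (\<Sum>p\<in>S. \<Sum>a\<in>UNIV. \<Sum>q\<in>S. \<Sum>a'\<in>UNIV. \<Sum>m\<in>UNIV. T v p a q a' m)"
      unfolding qfS_def sum_prod_split R(3)[symmetric] mmult_def T_def
      by (simp only: sum_distrib_left sum_distrib_right split_conv) (simp add: mult_ac)
    also have "... = (\<Sum>p\<in>S. \<Sum>a\<in>UNIV. \<Sum>q\<in>S. \<Sum>m\<in>UNIV. \<Sum>a'\<in>UNIV. T v p a q a' m)"
      by (rule sum.cong[OF refl], rule sum.cong[OF refl], rule sum.cong[OF refl], rule sum.swap)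
    also have "... = (\<Sum>p\<in>S. \<Sum>a\<in>UNIV. \<Sum>m\<in>UNIV. \<Sum>q\<in>S. \<Sum>a'\<in>UNIV. T v p a q a' m)"
      by (rule sum.cong[OF refl], rule sum.cong[OF refl], rule sum.swap)
    also have "... = (\<Sum>p\<in>S. \<Sum>m\<in>UNIV. \<Sum>a\<in>UNIV. \<Sum>q\<in>S. \<Sum>a'\<in>UNIV. T v p a q a' m)"
      by (rule sum.cong[OF refl], rule sum.swap)
    also have "... = (\<Sum>m\<in>UNIV. \<Sum>p\<in>S. \<Sum>a\<in>UNIV. \<Sum>q\<in>S. \<Sum>a'\<in>UNIV. T v p a q a' m)"
      by (rule sum.swap)
    also have "... = (\<Sum>m\<in>UNIV. \<Sum>p\<in>S. \<Sum>q\<in>S. \<Sum>a\<in>UNIV. \<Sum>a'\<in>UNIV. T v p a q a' m)"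
      by (rule sum.cong[OF refl], rule sum.cong[OF refl], rule sum.swap)
    also have "... = (\<Sum>m\<in>UNIV. \<Sum>p\<in>S. \<Sum>q\<in>S. \<Sum>a'\<in>UNIV. \<Sum>a\<in>UNIV. T v p a q a' m)"
      by (rule sum.cong[OF refl], rule sum.cong[OF refl], rule sum.cong[OF refl], rule sum.swap)
    also have "... = (\<Sum>m\<in>UNIV. qfS S M (w v m))"
      unfolding qfS_def w_def T_def
      by (simp only: sum_distrib_left sum_distrib_right cnj_sum complex_cnj_mult herm_cnj[OF R(2)]) (simp add: mult_ac)
    finally show "qfS (S \<times> UNIV) (\<lambda>(p, a) (q, a'). M p q * W a a') v = (\<Sum>m\<in>UNIV. qfS S M (w v m))" .
  qed
qed

lemma psd_on_trace_block:
  fixes C :: "('a::finite) op" and X :: "('p \<times> 'a) op"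
  assumes C: "psd C" and X: "psd_on (S \<times> UNIV) X"
  shows "psd_on S (\<lambda>p q. mtrace (mmult C (\<lambda>a a'. X (p, a) (q, a'))))"
proof -
  obtain R where R: "psd R" "herm R" "mmult R R = C" using psd_sqrt_ex[OF C] by blast
  define w :: "('p \<Rightarrow> complex) \<Rightarrow> 'a \<Rightarrow> 'p \<times> 'a \<Rightarrow> complex" where "w = (\<lambda>v m (q, i). v q * R i m)"
  define T where "T = (\<lambda>v p q i k m. cnj (v p) * R m k * X (p, k) (q, i) * v q * R i m)"
  show ?thesis
  proof (rule psd_on_sumI[OF finite _ X, where w=w])
    fix v
    have "qfS S (\<lambda>p q. mtrace (mmult C (\<lambda>a a'. X (p, a) (q, a')))) v = (\<Sum>p\<in>S. \<Sum>q\<in>S. \<Sum>i\<in>UNIV. \<Sum>k\<in>UNIV. \<Sum>m\<in>UNIV. T v p q i k m)"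
      unfolding qfS_def mtrace_def mmult_def R(3)[symmetric] T_def
      by (simp only: sum_distrib_left sum_distrib_right) (simp add: herm_cnj[OF R(2)] mult_ac)
    also have "... = (\<Sum>p\<in>S. \<Sum>q\<in>S. \<Sum>i\<in>UNIV. \<Sum>m\<in>UNIV. \<Sum>k\<in>UNIV. T v p q i k m)"
      by (rule sum.cong[OF refl], rule sum.cong[OF refl], rule sum.cong[OF refl], rule sum.swap)
    also have "... = (\<Sum>p\<in>S. \<Sum>q\<in>S. \<Sum>m\<in>UNIV. \<Sum>i\<in>UNIV. \<Sum>k\<in>UNIV. T v p q i k m)"
      by (rule sum.cong[OF refl], rule sum.cong[OF refl], rule sum.swap)
    also have "... = (\<Sum>p\<in>S. \<Sum>m\<in>UNIV. \<Sum>q\<in>S. \<Sum>i\<in>UNIV. \<Sum>k\<in>UNIV. T v p q i k m)"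
      by (rule sum.cong[OF refl], rule sum.swap)
    also have "... = (\<Sum>m\<in>UNIV. \<Sum>p\<in>S. \<Sum>q\<in>S. \<Sum>i\<in>UNIV. \<Sum>k\<in>UNIV. T v p q i k m)"
      by (rule sum.swap)
    also have "... = (\<Sum>m\<in>UNIV. \<Sum>p\<in>S. \<Sum>k\<in>UNIV. \<Sum>q\<in>S. \<Sum>i\<in>UNIV. T v p q i k m)"
      by (rule sum.cong[OF refl], rule sum.cong[OF refl], rule swap3[symmetric])
    also have "... = (\<Sum>m\<in>UNIV. qfS (S \<times> UNIV) X (w v m))"
      unfolding qfS_def sum_prod_split w_def T_def
      by (simp add: herm_cnj[OF R(2)] mult_ac)
    finally show "qfS S (\<lambda>p q. mtrace (mmult C (\<lambda>a a'. X (p, a) (q, a')))) v = (\<Sum>m\<in>UNIV. qfS (S \<times> UNIV) X (w v m))" .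
  qed
qed

lemma trace_mmult_add: "mtrace (mmult C (\<lambda>i j. X i j + Y i j)) = mtrace (mmult C X) + mtrace (mmult C Y)"
  by (simp add: mtrace_def mmult_def algebra_simps sum.distrib)
lemma trace_mmult_scale: "mtrace (mmult C (\<lambda>i j. c * X i j)) = c * mtrace (mmult C X)"
  by (simp add: mtrace_def mmult_def sum_distrib_left mult.left_commute)
lemma trace_mmult_sum: "mtrace (mmult (\<lambda>i j. \<Sum>y\<in>F. C y i j) \<rho>) = (\<Sum>y\<in>F. mtrace (mmult (C y) \<rho>))"
  unfolding mtrace_def mmult_def by (simp add: sum_distrib_right) (subst swap3, rule refl)
lemma trace_idop: "mtrace (mmult idop \<rho>) = mtrace \<rho>"
  by (simp add: mtrace_def mmult_def idop_def if_distrib[of "\<lambda>t. t * _"] sum.delta cong: if_cong)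

lemma mtrace_ptrace2: "mtrace (ptrace2 M) = mtrace (M :: (('k::finite) \<times> ('v::finite)) op)"
  by (simp add: mtrace_def ptrace2_def sum_UNIV_prod)
lemma mtrace_ptrace1: "mtrace (ptrace1 M) = mtrace (M :: (('k::finite) \<times> ('v::finite)) op)"
  by (simp add: mtrace_def ptrace1_def sum_UNIV_prod) (rule sum.swap)

lemma trace_lueders: "mtrace (mmult (mmult S \<rho>) S) = mtrace (mmult (mmult S S) (\<rho>::('a::finite) op))"
proof -
  have "mtrace (mmult (mmult S \<rho>) S) = (\<Sum>a\<in>UNIV. \<Sum>k\<in>UNIV. \<Sum>m\<in>UNIV. S a m * \<rho> m k * S k a)"
    unfolding mtrace_def mmult_def by (simp add: sum_distrib_right)
  also have "... = (\<Sum>k\<in>UNIV. \<Sum>m\<in>UNIV. \<Sum>a\<in>UNIV. S a m * \<rho> m k * S k a)" by (rule swap3)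
  also have "... = (\<Sum>k\<in>UNIV. \<Sum>m\<in>UNIV. \<Sum>a\<in>UNIV. S k a * S a m * \<rho> m k)" by (simp add: mult_ac)
  also have "... = mtrace (mmult (mmult S S) \<rho>)"
    unfolding mtrace_def mmult_def by (simp add: sum_distrib_right)
  finally show ?thesis .
qed

lemma lueders_Em: "mmult (mmult S (Em (i, j))) S a a' = S a i * S j a'"
proof -
  have "mmult S (Em (i, j)) a k = (if k = j then S a i else 0)" for k
  proof -
    have "mmult S (Em (i, j)) a k = (\<Sum>m\<in>UNIV. S a m * (if m = i \<and> k = j then 1 else 0))"
      by (simp add: mmult_def Em_def)
    also have "... = (if k = j then S a i else 0)" by (cases "k = j") (simp_all add: sum_if_eq_r[of "S a" i 1, simplified])
    finally show ?thesis .
  qed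
  thus ?thesis unfolding mmult_def[of "mmult S (Em (i, j))"] by (simp add: sum_if_eq_l)
qed

lemma lin_lueders: "is_linear_map (\<lambda>\<rho>. mmult (mmult S \<rho>) S)"
  unfolding is_linear_map_def mmult_def by (auto simp: algebra_simps sum.distrib sum_distrib_left intro!: ext)

lemma lin_psum2:
  assumes "\<And>y. is_linear_map (G y)"
  shows "is_linear_map (\<lambda>\<rho>. \<lambda>i j. \<Sum>y\<in>UNIV. ptrace2 (G y \<rho>) i j)"
  unfolding is_linear_map_def ptrace2_def
  using assms by (simp add: lin_add lin_scale sum.distrib sum_distrib_left)

lemma lin_psum1:
  assumes "\<And>y. is_linear_map (G y)"
  shows "is_linear_map (\<lambda>\<rho>. \<lambda>i j. \<Sum>y\<in>UNIV. ptrace1 (G y \<rho>) i j)"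
  unfolding is_linear_map_def ptrace1_def
  using assms by (simp add: lin_add lin_scale sum.distrib sum_distrib_left)

lemma mtrace_tensor: "mtrace (\<lambda>(a, b) (a', b'). c * \<sigma> a a' * \<tau> b b') = c * mtrace \<sigma> * mtrace (\<tau> :: ('v::finite) op)"
  for \<sigma> :: "('k::finite) op"
  by (simp add: mtrace_def sum_UNIV_prod sum_distrib_left sum_distrib_right mult.assoc) (rule sum.swap)

lemma bij_regroup: "bij (\<lambda>((i, a), b). (i, (a, b)))"
  by (rule bijI) (auto simp: inj_def surj_def)
lemma bij_regroup2: "bij (\<lambda>((i, b), a). (i, (a, b)))"
  by (rule bijI) (auto simp: inj_def surj_def)

lemma factor_S:
  fixes G :: "('y::finite) \<Rightarrow> ('h::finite) op \<Rightarrow> (('k::finite) \<times> ('v::finite)) op" and S :: "'k \<Rightarrow> 'h \<Rightarrow> complex"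
  assumes cp: "\<And>y. completely_positive (G y)"
    and sm: "\<And>i j a a'. (\<Sum>y\<in>UNIV. ptrace2 (G y (Em (i, j))) a a') = S a i * cnj (S a' j)"
  shows "\<exists>\<omega>. psd \<omega> \<and> (\<forall>i j a b a' b'. G yy (Em (i, j)) (a, b) (a', b') = S a i * cnj (S a' j) * \<omega> b b')"
proof -
  define Z where "Z = (\<lambda>y. \<lambda>((i, a), b) ((j, a'), b'). G y (Em (i, j)) (a, b) (a', b'))"
  have pZ: "psd (Z y)" for y
  proof -
    have "Z y = (\<lambda>p q. choi (G y) ((\<lambda>((i, a), b). (i, (a, b))) p) ((\<lambda>((i, a), b). (i, (a, b))) q))"
      by (auto intro!: ext simp: Z_def choi_apply)
    thus ?thesis using psd_reindex2[OF bij_regroup cp_choi[OF cp[of y]]] by simp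
  qed
  define s where "s = (\<lambda>(i, a). S a i)"
  have tr: "(\<Sum>y\<in>UNIV. \<Sum>b\<in>UNIV. Z y (p, b) (p', b)) = s p * cnj (s p')" for p p'
    using sm[of "fst p" "fst p'" "snd p" "snd p'"]
    by (cases p, cases p') (simp add: Z_def s_def ptrace2_def)
  obtain \<omega> where "psd \<omega>" and Zf: "Z yy = (\<lambda>(p, v) (p', v'). s p * cnj (s p') * \<omega> v v')"
    using factor[of Z s yy, OF pZ tr] by blast
  moreover have "G yy (Em (i, j)) (a, b) (a', b') = S a i * cnj (S a' j) * \<omega> b b'" for i j a b a' b'
    using fun_cong[OF fun_cong[OF Zf, of "((i, a), b)"], of "((j, a'), b')"] by (simp add: Z_def s_def)
  ultimately show ?thesis by blast
qed

lemma factor_T: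
  fixes G :: "('x::finite) \<Rightarrow> ('h::finite) op \<Rightarrow> (('k::finite) \<times> ('v::finite)) op" and T :: "'v \<Rightarrow> 'h \<Rightarrow> complex"
  assumes cp: "\<And>x. completely_positive (G x)"
    and sm: "\<And>i j b b'. (\<Sum>x\<in>UNIV. ptrace1 (G x (Em (i, j))) b b') = T b i * cnj (T b' j)"
  shows "\<exists>\<omega>. psd \<omega> \<and> (\<forall>i j a b a' b'. G xx (Em (i, j)) (a, b) (a', b') = T b i * cnj (T b' j) * \<omega> a a')"
proof -
  define Z where "Z = (\<lambda>x. \<lambda>((i, b), a) ((j, b'), a'). G x (Em (i, j)) (a, b) (a', b'))"
  have pZ: "psd (Z x)" for x
  proof -
    have "Z x = (\<lambda>p q. choi (G x) ((\<lambda>((i, b), a). (i, (a, b))) p) ((\<lambda>((i, b), a). (i, (a, b))) q))"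
      by (auto intro!: ext simp: Z_def choi_apply)
    thus ?thesis using psd_reindex2[OF bij_regroup2 cp_choi[OF cp[of x]]] by simp
  qed
  define t where "t = (\<lambda>(i, b). T b i)"
  have tr: "(\<Sum>x\<in>UNIV. \<Sum>a\<in>UNIV. Z x (p, a) (p', a)) = t p * cnj (t p')" for p p'
    using sm[of "fst p" "fst p'" "snd p" "snd p'"]
    by (cases p, cases p') (simp add: Z_def t_def ptrace1_def)
  obtain \<omega> where "psd \<omega>" and Zf: "Z xx = (\<lambda>(p, v) (p', v'). t p * cnj (t p') * \<omega> v v')"
    using factor[of Z t xx, OF pZ tr] by blast
  moreover have "G xx (Em (i, j)) (a, b) (a', b') = T b i * cnj (T b' j) * \<omega> a a'" for i j a b a' b'
    using fun_cong[OF fun_cong[OF Zf, of "((i, b), a)"], of "((j, b'), a')"] by (simp add: Z_def t_def)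
  ultimately show ?thesis by blast
qed

lemma mtrace_sum: "mtrace (\<lambda>i j. \<Sum>y\<in>F. M y i j) = (\<Sum>y\<in>F. mtrace (M y :: ('a::finite) op))"
  unfolding mtrace_def by (rule sum.swap)

theorem proposition2:
  fixes I :: "('x::finite) \<Rightarrow> ('h::finite) op \<Rightarrow> ('k::finite) op"
    and J :: "('y::finite) \<Rightarrow> 'h op \<Rightarrow> ('v::finite) op"
  assumes "instrument I" and "instrument J"
    and "compatible (lueders (induced_povm I)) (lueders (induced_povm J))"
  shows "compatible I J"
proof -
  define A where "A = induced_povm I"
  define B where "B = induced_povm J"
  have LI: "is_linear_map (I x)" "completely_positive (I x)" for x using assms(1) instrument_def by auto
  have LJ: "is_linear_map (J y)" "completely_positive (J y)" for y using assms(2) instrument_def by auto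
  have trI: "mtrace (mmult (A x) \<rho>) = mtrace (I x \<rho>)" for x \<rho> unfolding A_def by (rule induced_povm_spec[OF LI(1)])
  have trJ: "mtrace (mmult (B y) \<rho>) = mtrace (J y \<rho>)" for y \<rho> unfolding B_def by (rule induced_povm_spec[OF LJ(1)])
  have pA: "psd (A x)" for x unfolding A_def by (rule induced_povm_psd[OF LI])
  have pB: "psd (B y)" for y unfolding B_def by (rule induced_povm_psd[OF LJ])
  define S where "S = (\<lambda>x. msqrt (A x))"
  define T where "T = (\<lambda>y. msqrt (B y))"
  have pS: "psd (S x)" "mmult (S x) (S x) = A x" "herm (S x)" for x
    using msqrt[OF pA[of x]] psd_herm unfolding S_def by auto
  have pT: "psd (T y)" "mmult (T y) (T y) = B y" "herm (T y)" for y
    using msqrt[OF pB[of y]] psd_herm unfolding T_def by auto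
  obtain G' :: "'x \<times> 'y \<Rightarrow> 'h op \<Rightarrow> ('h \<times> 'h) op" where G': "instrument G'"
    and mS: "\<And>\<rho>. is_state \<rho> \<Longrightarrow>
       (\<forall>y. (\<lambda>i j. \<Sum>x\<in>UNIV. ptrace1 (G' (x, y) \<rho>) i j) = lueders B y \<rho>) \<and>
       (\<forall>x. (\<lambda>i j. \<Sum>y\<in>UNIV. ptrace2 (G' (x, y) \<rho>) i j) = lueders A x \<rho>)"
    using assms(3) unfolding compatible_def A_def B_def by blast
  have LG: "is_linear_map (G' p)" "completely_positive (G' p)" for p using G' instrument_def by auto
  have m2: "(\<lambda>i j. \<Sum>y\<in>UNIV. ptrace2 (G' (x, y) \<rho>) i j) = mmult (mmult (S x) \<rho>) (S x)" for x \<rho>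
  proof (rule lin_state_eq[where \<Phi>="\<lambda>\<rho>. (\<lambda>i j. \<Sum>y\<in>UNIV. ptrace2 (G' (x, y) \<rho>) i j)"])
    show "is_linear_map (\<lambda>\<rho>. (\<lambda>i j. \<Sum>y\<in>UNIV. ptrace2 (G' (x, y) \<rho>) i j))" by (rule lin_psum2) (rule LG)
    show "is_linear_map (\<lambda>\<rho>. mmult (mmult (S x) \<rho>) (S x))" by (rule lin_lueders)
    fix \<sigma> :: "'h op" assume "is_state \<sigma>"
    thus "(\<lambda>i j. \<Sum>y\<in>UNIV. ptrace2 (G' (x, y) \<sigma>) i j) = mmult (mmult (S x) \<sigma>) (S x)"
      using mS unfolding lueders_def S_def by blast
  qed
  have m1: "(\<lambda>i j. \<Sum>x\<in>UNIV. ptrace1 (G' (x, y) \<rho>) i j) = mmult (mmult (T y) \<rho>) (T y)" for y \<rho>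
  proof (rule lin_state_eq[where \<Phi>="\<lambda>\<rho>. (\<lambda>i j. \<Sum>x\<in>UNIV. ptrace1 (G' (x, y) \<rho>) i j)"])
    show "is_linear_map (\<lambda>\<rho>. (\<lambda>i j. \<Sum>x\<in>UNIV. ptrace1 (G' (x, y) \<rho>) i j))" by (rule lin_psum1) (rule LG)
    show "is_linear_map (\<lambda>\<rho>. mmult (mmult (T y) \<rho>) (T y))" by (rule lin_lueders)
    fix \<sigma> :: "'h op" assume "is_state \<sigma>"
    thus "(\<lambda>i j. \<Sum>x\<in>UNIV. ptrace1 (G' (x, y) \<sigma>) i j) = mmult (mmult (T y) \<sigma>) (T y)"
      using mS unfolding lueders_def T_def by blast
  qed
  have FS: "\<forall>p. \<exists>\<omega>. psd \<omega> \<and> (\<forall>i j a b a' b'. G' p (Em (i, j)) (a, b) (a', b') = S (fst p) a i * cnj (S (fst p) a' j) * \<omega> b b')"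
  proof
    fix p :: "'x \<times> 'y"
    obtain x y where p: "p = (x, y)" by (cases p)
    have "\<exists>\<omega>. psd \<omega> \<and> (\<forall>i j a b a' b'. G' (x, y) (Em (i, j)) (a, b) (a', b') = S x a i * cnj (S x a' j) * \<omega> b b')"
    proof (rule factor_S[where G="\<lambda>y. G' (x, y)" and yy=y, simplified])
      show "completely_positive (G' (x, y))" for y by (rule LG)
      fix i j a a'
      have "(\<Sum>y\<in>UNIV. ptrace2 (G' (x, y) (Em (i, j))) a a') = mmult (mmult (S x) (Em (i, j))) (S x) a a'"
        using fun_cong[OF fun_cong[OF m2[of x "Em (i, j)"], of a], of a'] by simp
      also have "... = S x a i * cnj (S x a' j)" unfolding lueders_Em using herm_cnj[OF pS(3)] by simp
      finally show "(\<Sum>y\<in>UNIV. ptrace2 (G' (x, y) (Em (i, j))) a a') = S x a i * cnj (S x a' j)" .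
    qed
    thus "\<exists>\<omega>. psd \<omega> \<and> (\<forall>i j a b a' b'. G' p (Em (i, j)) (a, b) (a', b') = S (fst p) a i * cnj (S (fst p) a' j) * \<omega> b b')"
      using p by simp
  qed
  obtain WS where WS: "\<And>p. psd (WS p)" "\<And>p i j a b a' b'. G' p (Em (i, j)) (a, b) (a', b') = S (fst p) a i * cnj (S (fst p) a' j) * WS p b b'"
    using choice[OF FS] by blast
  have FT: "\<forall>p. \<exists>\<omega>. psd \<omega> \<and> (\<forall>i j a b a' b'. G' p (Em (i, j)) (a, b) (a', b') = T (snd p) b i * cnj (T (snd p) b' j) * \<omega> a a')"
  proof
    fix p :: "'x \<times> 'y"
    obtain x y where p: "p = (x, y)" by (cases p)
    have "\<exists>\<omega>. psd \<omega> \<and> (\<forall>i j a b a' b'. G' (x, y) (Em (i, j)) (a, b) (a', b') = T y b i * cnj (T y b' j) * \<omega> a a')"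
    proof (rule factor_T[where G="\<lambda>x. G' (x, y)" and xx=x, simplified])
      show "completely_positive (G' (x, y))" for x by (rule LG)
      fix i j b b'
      have "(\<Sum>x\<in>UNIV. ptrace1 (G' (x, y) (Em (i, j))) b b') = mmult (mmult (T y) (Em (i, j))) (T y) b b'"
        using fun_cong[OF fun_cong[OF m1[of y "Em (i, j)"], of b], of b'] by simp
      also have "... = T y b i * cnj (T y b' j)" unfolding lueders_Em using herm_cnj[OF pT(3)] by simp
      finally show "(\<Sum>x\<in>UNIV. ptrace1 (G' (x, y) (Em (i, j))) b b') = T y b i * cnj (T y b' j)" .
    qed
    thus "\<exists>\<omega>. psd \<omega> \<and> (\<forall>i j a b a' b'. G' p (Em (i, j)) (a, b) (a', b') = T (snd p) b i * cnj (T (snd p) b' j) * \<omega> a a')"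
      using p by simp
  qed
  obtain WT where WT: "\<And>p. psd (WT p)" "\<And>p i j a b a' b'. G' p (Em (i, j)) (a, b) (a', b') = T (snd p) b i * cnj (T (snd p) b' j) * WT p a a'"
    using choice[OF FT] by blast
  have "\<forall>x. \<exists>\<alpha>. A x = outer \<alpha> \<alpha>"
  proof
    fix x
    show "\<exists>\<alpha>. A x = outer \<alpha> \<alpha>"
    proof (rule rank_one[where W="\<lambda>y. WS (x, y)" and W'="\<lambda>y. WT (x, y)" and T=T])
      show "S x a i * cnj (S x a' j) * WS (x, y) b b' = T y b i * cnj (T y b' j) * WT (x, y) a a'" for y i j a b a' b'
        using WS(2)[of "(x, y)"] WT(2)[of "(x, y)"] by simp
      show "psd (WS (x, y))" for y by (rule WS(1))
      show "psd (S x)" "mmult (S x) (S x) = A x" by (rule pS)+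
      fix i a a'
      have "(\<Sum>y\<in>UNIV. \<Sum>b\<in>UNIV. S x a i * cnj (S x a' i) * WS (x, y) b b) = (\<Sum>y\<in>UNIV. ptrace2 (G' (x, y) (Em (i, i))) a a')"
        by (simp add: ptrace2_def WS(2))
      also have "... = mmult (mmult (S x) (Em (i, i))) (S x) a a'"
        using fun_cong[OF fun_cong[OF m2[of x "Em (i, i)"], of a], of a'] by simp
      also have "... = S x a i * cnj (S x a' i)" unfolding lueders_Em using herm_cnj[OF pS(3)] by simp
      finally show "(\<Sum>y\<in>UNIV. \<Sum>b\<in>UNIV. S x a i * cnj (S x a' i) * WS (x, y) b b) = S x a i * cnj (S x a' i)" .
    qed
  qed
  then obtain \<alpha> where \<alpha>: "\<And>x. A x = outer (\<alpha> x) (\<alpha> x)" using choice by metis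
  have "\<forall>y. \<exists>\<beta>. B y = outer \<beta> \<beta>"
  proof
    fix y
    show "\<exists>\<beta>. B y = outer \<beta> \<beta>"
    proof (rule rank_one[where W="\<lambda>x. WT (x, y)" and W'="\<lambda>x. WS (x, y)" and T=S])
      show "T y a i * cnj (T y a' j) * WT (x, y) b b' = S x b i * cnj (S x b' j) * WS (x, y) a a'" for x i j a b a' b'
        using WS(2)[of "(x, y)" i j b a b' a'] WT(2)[of "(x, y)" i j b a b' a'] by simp
      show "psd (WT (x, y))" for x by (rule WT(1))
      show "psd (T y)" "mmult (T y) (T y) = B y" by (rule pT)+
      fix i a a'
      have "(\<Sum>x\<in>UNIV. \<Sum>b\<in>UNIV. T y a i * cnj (T y a' i) * WT (x, y) b b) = (\<Sum>x\<in>UNIV. ptrace1 (G' (x, y) (Em (i, i))) a a')"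
        by (simp add: ptrace1_def WT(2))
      also have "... = mmult (mmult (T y) (Em (i, i))) (T y) a a'"
        using fun_cong[OF fun_cong[OF m1[of y "Em (i, i)"], of a], of a'] by simp
      also have "... = T y a i * cnj (T y a' i)" unfolding lueders_Em using herm_cnj[OF pT(3)] by simp
      finally show "(\<Sum>x\<in>UNIV. \<Sum>b\<in>UNIV. T y a i * cnj (T y a' i) * WT (x, y) b b) = T y a i * cnj (T y a' i)" .
    qed
  qed
  then obtain \<beta> where \<beta>: "\<And>y. B y = outer (\<beta> y) (\<beta> y)" using choice by metis
  have "\<forall>x. \<exists>\<sigma>. is_state \<sigma> \<and> (\<forall>\<rho>. I x \<rho> = (\<lambda>a b. mtrace (mmult (A x) \<rho>) * \<sigma> a b))"
  proof
    fix x
    show "\<exists>\<sigma>. is_state \<sigma> \<and> (\<forall>\<rho>. I x \<rho> = (\<lambda>a b. mtrace (mmult (A x) \<rho>) * \<sigma> a b))"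
      using measure_prepare[OF LI(1)[of x] LI(2)[of x], where \<alpha>="\<alpha> x"] trI \<alpha> by simp
  qed
  then obtain \<sigma> where \<sigma>: "\<And>x. is_state (\<sigma> x)" "\<And>x \<rho>. I x \<rho> = (\<lambda>a b. mtrace (mmult (A x) \<rho>) * \<sigma> x a b)"
    using choice by metis
  have "\<forall>y. \<exists>\<tau>. is_state \<tau> \<and> (\<forall>\<rho>. J y \<rho> = (\<lambda>a b. mtrace (mmult (B y) \<rho>) * \<tau> a b))"
  proof
    fix y
    show "\<exists>\<tau>. is_state \<tau> \<and> (\<forall>\<rho>. J y \<rho> = (\<lambda>a b. mtrace (mmult (B y) \<rho>) * \<tau> a b))"
      using measure_prepare[OF LJ(1)[of y] LJ(2)[of y], where \<alpha>="\<beta> y"] trJ \<beta> by simp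
  qed
  then obtain \<tau> where \<tau>: "\<And>y. is_state (\<tau> y)" "\<And>y \<rho>. J y \<rho> = (\<lambda>a b. mtrace (mmult (B y) \<rho>) * \<tau> y a b)"
    using choice by metis
  define C where "C = induced_povm G'"
  have trC: "mtrace (mmult (C p) \<rho>) = mtrace (G' p \<rho>)" for p \<rho> unfolding C_def by (rule induced_povm_spec[OF LG(1)])
  have pC: "psd (C p)" for p unfolding C_def by (rule induced_povm_psd[OF LG])
  have sumC1: "(\<lambda>i j. \<Sum>y\<in>UNIV. C (x, y) i j) = A x" for x
  proof (rule trace_mmult_eq)
    fix \<rho>
    have "mtrace (mmult (\<lambda>i j. \<Sum>y\<in>UNIV. C (x, y) i j) \<rho>) = (\<Sum>y\<in>UNIV. mtrace (ptrace2 (G' (x, y) \<rho>)))"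
      by (simp add: trace_mmult_sum trC mtrace_ptrace2)
    also have "... = mtrace (mmult (mmult (S x) \<rho>) (S x))" unfolding mtrace_sum[symmetric] m2 ..
    also have "... = mtrace (mmult (A x) \<rho>)" using trace_lueders[of "S x" \<rho>] pS(2)[of x] by simp
    finally show "mtrace (mmult (\<lambda>i j. \<Sum>y\<in>UNIV. C (x, y) i j) \<rho>) = mtrace (mmult (A x) \<rho>)" .
  qed
  have sumC2: "(\<lambda>i j. \<Sum>x\<in>UNIV. C (x, y) i j) = B y" for y
  proof (rule trace_mmult_eq)
    fix \<rho>
    have "mtrace (mmult (\<lambda>i j. \<Sum>x\<in>UNIV. C (x, y) i j) \<rho>) = (\<Sum>x\<in>UNIV. mtrace (ptrace1 (G' (x, y) \<rho>)))"
      by (simp add: trace_mmult_sum trC mtrace_ptrace1)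
    also have "... = mtrace (mmult (mmult (T y) \<rho>) (T y))" unfolding mtrace_sum[symmetric] m1 ..
    also have "... = mtrace (mmult (B y) \<rho>)" using trace_lueders[of "T y" \<rho>] pT(2)[of y] by simp
    finally show "mtrace (mmult (\<lambda>i j. \<Sum>x\<in>UNIV. C (x, y) i j) \<rho>) = mtrace (mmult (B y) \<rho>)" .
  qed
  have sumA: "(\<Sum>x\<in>UNIV. mtrace (mmult (A x) \<rho>)) = mtrace \<rho>" for \<rho>
  proof -
    have "(\<Sum>x\<in>UNIV. mtrace (mmult (A x) \<rho>)) = mtrace (\<lambda>i j. \<Sum>x\<in>UNIV. I x \<rho> i j)"
      by (simp add: trI mtrace_sum)
    also have "... = mtrace \<rho>" using assms(1) unfolding instrument_def by blast
    finally show ?thesis .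
  qed
  have sumC: "(\<Sum>p\<in>UNIV. mtrace (mmult (C p) \<rho>)) = mtrace \<rho>" for \<rho>
  proof -
    have "(\<Sum>p\<in>UNIV. mtrace (mmult (C p) \<rho>)) = (\<Sum>x\<in>UNIV. mtrace (mmult (\<lambda>i j. \<Sum>y\<in>UNIV. C (x, y) i j) \<rho>))"
      by (simp add: sum_UNIV_prod trace_mmult_sum)
    also have "... = mtrace \<rho>" unfolding sumC1 sumA ..
    finally show ?thesis .
  qed
  have trS: "mtrace (\<sigma> x) = 1" for x using \<sigma>(1) is_state_def by auto
  have trT: "mtrace (\<tau> y) = 1" for y using \<tau>(1) is_state_def by auto
  have pSig: "psd (\<sigma> x)" for x using \<sigma>(1) is_state_def by auto
  have pTau: "psd (\<tau> y)" for y using \<tau>(1) is_state_def by auto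
  define G :: "'x \<times> 'y \<Rightarrow> 'h op \<Rightarrow> ('k \<times> 'v) op" where
    "G = (\<lambda>p \<rho>. \<lambda>(a, b) (a', b'). mtrace (mmult (C p) \<rho>) * \<sigma> (fst p) a a' * \<tau> (snd p) b b')"
  have trG: "mtrace (G p \<rho>) = mtrace (mmult (C p) \<rho>)" for p \<rho>
    unfolding G_def mtrace_tensor trS trT by simp
  have instG: "instrument G" unfolding instrument_def
  proof (intro conjI allI)
    fix p :: "'x \<times> 'y"
    show "is_linear_map (G p)" unfolding is_linear_map_def G_def
      by (auto intro!: ext simp: trace_mmult_add trace_mmult_scale algebra_simps)
    show "completely_positive (G p)" unfolding completely_positive_def
    proof (intro allI impI)
      fix n :: nat and X :: "(nat \<times> 'h) op"
      assume X: "psd_on ({..<n} \<times> UNIV) X"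
      define M where "M = (\<lambda>q q'. mtrace (mmult (C p) (\<lambda>a a'. X (q, a) (q', a'))))"
      have pM: "psd_on {..<n} M" unfolding M_def by (rule psd_on_trace_block[OF pC X])
      have pST: "psd (\<lambda>(a, b) (a', b'). \<sigma> (fst p) a a' * \<tau> (snd p) b b')"
        using psd_on_tensor[of UNIV "\<sigma> (fst p)" "\<tau> (snd p)"] pSig pTau by (simp add: psd_def)
      have "psd_on ({..<n} \<times> UNIV) (\<lambda>(q, c) (q', c'). M q q' * (\<lambda>(a, b) (a', b'). \<sigma> (fst p) a a' * \<tau> (snd p) b b') c c')"
        by (rule psd_on_tensor[OF pM pST]) simp
      moreover have "ampl (G p) X = (\<lambda>(q, c) (q', c'). M q q' * (\<lambda>(a, b) (a', b'). \<sigma> (fst p) a a' * \<tau> (snd p) b b') c c')"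
        by (auto intro!: ext simp: ampl_def G_def M_def mult.assoc)
      ultimately show "psd_on ({..<n} \<times> UNIV) (ampl (G p) X)" by simp
    qed
    show "trace_nonincreasing (G p)" unfolding trace_nonincreasing_def
    proof (intro allI impI)
      fix \<rho> :: "'h op" assume r: "psd \<rho>"
      have nn: "Re (mtrace (mmult (C q) \<rho>)) \<ge> 0" for q using trace_psd_prod(2)[OF pC r] .
      have "Re (mtrace (G p \<rho>)) = Re (mtrace (mmult (C p) \<rho>))" by (simp add: trG)
      also have "... \<le> (\<Sum>q\<in>UNIV. Re (mtrace (mmult (C q) \<rho>)))"
        by (rule member_le_sum) (simp_all add: nn)
      also have "... = Re (mtrace \<rho>)" using sumC[of \<rho>] by (simp flip: Re_sum)
      finally show "Re (mtrace (G p \<rho>)) \<le> Re (mtrace \<rho>)" .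
    qed
  next
    fix \<rho> :: "'h op"
    show "mtrace (\<lambda>i j. \<Sum>p\<in>UNIV. G p \<rho> i j) = mtrace \<rho>"
      by (simp add: mtrace_sum trG sumC)
  qed
  have marg1: "(\<lambda>i j. \<Sum>x\<in>UNIV. ptrace1 (G (x, y) \<rho>) i j) = J y \<rho>" for y \<rho>
  proof -
    have "ptrace1 (G (x, y) \<rho>) b b' = mtrace (mmult (C (x, y)) \<rho>) * \<tau> y b b'" for x b b'
      using trS[of x] by (simp add: ptrace1_def G_def mtrace_def sum_distrib_right[symmetric] mult_ac)
    hence "(\<lambda>i j. \<Sum>x\<in>UNIV. ptrace1 (G (x, y) \<rho>) i j) = (\<lambda>i j. mtrace (mmult (\<lambda>a b. \<Sum>x\<in>UNIV. C (x, y) a b) \<rho>) * \<tau> y i j)"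
      by (simp add: trace_mmult_sum sum_distrib_right)
    also have "... = J y \<rho>" unfolding sumC2 \<tau>(2) ..
    finally show ?thesis .
  qed
  have marg2: "(\<lambda>i j. \<Sum>y\<in>UNIV. ptrace2 (G (x, y) \<rho>) i j) = I x \<rho>" for x \<rho>
  proof -
    have "ptrace2 (G (x, y) \<rho>) a a' = mtrace (mmult (C (x, y)) \<rho>) * \<sigma> x a a'" for y a a'
    proof -
      have "ptrace2 (G (x, y) \<rho>) a a' = (\<Sum>v\<in>UNIV. (mtrace (mmult (C (x, y)) \<rho>) * \<sigma> x a a') * \<tau> y v v)"
        by (simp add: ptrace2_def G_def)
      also have "... = mtrace (mmult (C (x, y)) \<rho>) * \<sigma> x a a' * mtrace (\<tau> y)"
        by (simp only: mtrace_def[of "\<tau> y"] sum_distrib_left)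
      finally show ?thesis using trT[of y] by simp
    qed
    hence "(\<lambda>i j. \<Sum>y\<in>UNIV. ptrace2 (G (x, y) \<rho>) i j) = (\<lambda>i j. mtrace (mmult (\<lambda>a b. \<Sum>y\<in>UNIV. C (x, y) a b) \<rho>) * \<sigma> x i j)"
      by (simp add: trace_mmult_sum sum_distrib_right)
    also have "... = I x \<rho>" unfolding sumC1 \<sigma>(2) ..
    finally show ?thesis .
  qed
  show ?thesis unfolding compatible_def using instG marg1 marg2 by blast
qed

end
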